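(* Let $p \ge 2$ be a fixed integer and let $\lambda = \lambda(n) \ge 0$. Let $\mathbf{x}_* \in \mathbb{R}^n$ be drawn from any prior supported on the sphere $\{\mathbf{x} \in \mathbb{R}^n : \|\mathbf{x}\| = \sqrt{n}\}$, and let $\mathbf{Y} = \lambda \mathbf{x}_*^{\otimes p} + \mathbf{G}$ (spiked tensor model). Suppose we are given $\mathbf{u} \in \mathbb{R}^n$ with $\mathrm{corr}(\mathbf{u},\mathbf{x}_* ) \ge \tau$, and set $\widehat{\mathbf{x}} = \mathbf{Y}\{\mathbf{u}\}$. Then there exists a constant $c = c(p) > 0$ such that with high probability \[\mathrm{corr}(\widehat{\mathbf{x}},\mathbf{x}_* ) \ge 1 - c\,\lambda^{-1}\tau^{1-p} n^{(1-p)/2}.\] In particular, if $\tau > 0$ is any constant and $\lambda = \omega(n^{(1-p)/2})$, then $\mathrm{corr}(\widehat{\mathbf{x}},\mathbf{x}_* ) = 1 - o(1)$ with high probability.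
   Context: The noise tensor $\mathbf{G} \in (\mathbb{R}^n)^{\otimes p}$ is $\mathbf{G} = \frac{1}{\sqrt{p!}}\sum_{\pi \in S_p} \widetilde{\mathbf{G}}^\pi$, where $\widetilde{\mathbf{G}}$ has i.i.d. $\mathcal{N}(0,1)$ entries, independent of $\mathbf{x}_*$, and $\widetilde{\mathbf{G}}^\pi_{i_1,\ldots,i_p} = \widetilde{\mathbf{G}}_{i_{\pi(1)},\ldots,i_{\pi(p)}}$. For $\mathbf{u} \in \mathbb{R}^n$, $\mathbf{Y}\{\mathbf{u}\} \in \mathbb{R}^n$ is the vector with $\mathbf{Y}\{\mathbf{u}\}_i = \sum_{j_1,\ldots,j_{p-1} \in [n]} \mathbf{Y}_{i,j_1,\ldots,j_{p-1}} \mathbf{u}_{j_1}\cdots \mathbf{u}_{j_{p-1}}$ (one step of the tensor power method). The normalized correlation is $\mathrm{corr}(\mathbf{a},\mathbf{b}) = |\langle \mathbf{a},\mathbf{b}\rangle|/(\|\mathbf{a}\|\|\mathbf{b}\|)$. "With high probability" means with probability $1-o(1)$ as $n \to \infty$ with $p$ fixed; asymptotic notation refers to $n\to\infty$. *)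

theory Defs
  imports "HOL-Probability.Probability" "HOL-Combinatorics.Permutations" "HOL-Library.Landau_Symbols"
begin

text \<open>Vectors in R^n are functions nat => real; only coordinates 0..n-1 matter.
  Order-p tensors are functions on index lists of length p with entries < n.\<close>

definition idx :: "nat \<Rightarrow> nat \<Rightarrow> nat list set" where
  "idx n p = {is. length is = p \<and> set is \<subseteq> {..<n}}"

definition vinner :: "nat \<Rightarrow> (nat \<Rightarrow> real) \<Rightarrow> (nat \<Rightarrow> real) \<Rightarrow> real" where
  "vinner n a b = (\<Sum>i<n. a i * b i)"

definition vnorm :: "nat \<Rightarrow> (nat \<Rightarrow> real) \<Rightarrow> real" where
  "vnorm n a = sqrt (vinner n a a)"

definition corr :: "nat \<Rightarrow> (nat \<Rightarrow> real) \<Rightarrow> (nat \<Rightarrow> real) \<Rightarrow> real" where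
  "corr n a b = \<bar>vinner n a b\<bar> / (vnorm n a * vnorm n b)"

definition std_gauss :: "real measure" where
  "std_gauss = density lborel std_normal_density"

definition gauss_tensor :: "nat \<Rightarrow> nat \<Rightarrow> (nat list \<Rightarrow> real) measure" where
  "gauss_tensor n p = PiM (idx n p) (\<lambda>_. std_gauss)"

definition perm_idx :: "(nat \<Rightarrow> nat) \<Rightarrow> nat list \<Rightarrow> nat list" where
  "perm_idx \<pi> is = map (\<lambda>k. is ! \<pi> k) [0..<length is]"

definition sym_noise :: "nat \<Rightarrow> (nat list \<Rightarrow> real) \<Rightarrow> nat list \<Rightarrow> real" where
  "sym_noise p Gt is = (1 / sqrt (fact p)) * (\<Sum>\<pi>\<in>{\<pi>. \<pi> permutes {..<p}}. Gt (perm_idx \<pi> is))"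

definition spiked_tensor :: "nat \<Rightarrow> real \<Rightarrow> (nat \<Rightarrow> real) \<Rightarrow> (nat list \<Rightarrow> real) \<Rightarrow> nat list \<Rightarrow> real" where
  "spiked_tensor p lam x Gt is = lam * prod_list (map x is) + sym_noise p Gt is"

definition tensor_apply :: "nat \<Rightarrow> nat \<Rightarrow> (nat list \<Rightarrow> real) \<Rightarrow> (nat \<Rightarrow> real) \<Rightarrow> nat \<Rightarrow> real" where
  "tensor_apply n p Y u i = (\<Sum>js\<in>idx n (p - 1). Y (i # js) * prod_list (map u js))"

definition vec_space :: "nat \<Rightarrow> (nat \<Rightarrow> real) measure" where
  "vec_space n = PiM {..<n} (\<lambda>_. lborel)"

definition sphere_prior :: "nat \<Rightarrow> (nat \<Rightarrow> real) measure \<Rightarrow> bool" where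
  "sphere_prior n \<mu> \<longleftrightarrow> prob_space \<mu> \<and> sets \<mu> = sets (vec_space n)
     \<and> (AE x in \<mu>. vnorm n x = sqrt (real n))"

definition model :: "nat \<Rightarrow> nat \<Rightarrow> (nat \<Rightarrow> real) measure \<Rightarrow> ((nat \<Rightarrow> real) \<times> (nat list \<Rightarrow> real)) measure" where
  "model n p \<mu> = \<mu> \<Otimes>\<^sub>M gauss_tensor n p"

text \<open>Event A n holds with high probability: it contains measurable events
  whose probability tends to 1 (inner probability -> 1).\<close>
definition whp :: "(nat \<Rightarrow> 'a measure) \<Rightarrow> (nat \<Rightarrow> 'a set) \<Rightarrow> bool" where
  "whp M A \<longleftrightarrow> (\<exists>E. (\<forall>n. E n \<in> sets (M n) \<and> E n \<subseteq> A n) \<and> (\<lambda>n. measure (M n) (E n)) \<longlonglongrightarrow> 1)"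

end

theory Submission
  imports Defs
begin

lemma finite_idx[simp]: "finite (idx n p)" unfolding idx_def
  using finite_lists_length_eq[of "{..<n}" p] by (simp add: conj_commute)

lemma idx_Suc: "idx n (Suc p) = (\<lambda>(i,js). i#js) ` ({..<n} \<times> idx n p)"
proof (rule set_eqI)
  fix xs show "xs \<in> idx n (Suc p) \<longleftrightarrow> xs \<in> (\<lambda>(i,js). i#js) ` ({..<n} \<times> idx n p)"
    by (cases xs) (auto simp: idx_def)
qed

lemma sum_idx_Suc: "(\<Sum>is\<in>idx n (Suc p). f is) = (\<Sum>i<n. \<Sum>js\<in>idx n p. f (i#js))"
proof -
  have inj: "inj_on (\<lambda>(i,js). i#js) ({..<n} \<times> idx n p)" by (auto simp: inj_on_def)
  have "(\<Sum>is\<in>idx n (Suc p). f is) = (\<Sum>x\<in>{..<n} \<times> idx n p. f ((\<lambda>(i,js). i#js) x))"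
    unfolding idx_Suc by (rule sum.reindex[OF inj, unfolded comp_def])
  also have "\<dots> = (\<Sum>i<n. \<Sum>js\<in>idx n p. f (i#js))"
    by (simp add: sum.cartesian_product split_def)
  finally show ?thesis .
qed

lemma sum_idx_prod: "(\<Sum>is\<in>idx n p. \<Prod>k<p. f k (is!k)) = (\<Prod>k<p. \<Sum>i<n. (f k i :: real))"
proof (induction p arbitrary: f)
  case 0
  have "idx n 0 = {[]}" by (auto simp: idx_def)
  then show ?case by simp
next
  case (Suc p)
  have "(\<Sum>is\<in>idx n (Suc p). \<Prod>k<Suc p. f k (is!k))
      = (\<Sum>i<n. \<Sum>js\<in>idx n p. f 0 i * (\<Prod>k<p. f (Suc k) (js!k)))"
    by (simp add: sum_idx_Suc prod.lessThan_Suc_shift del: prod.lessThan_Suc)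
  also have "\<dots> = (\<Sum>i<n. f 0 i * (\<Sum>js\<in>idx n p. (\<Prod>k<p. f (Suc k) (js!k))))"
    by (simp add: sum_distrib_left)
  also have "\<dots> = (\<Sum>i<n. f 0 i) * (\<Prod>k<p. \<Sum>i<n. f (Suc k) i)"
    using Suc[of "\<lambda>k. f (Suc k)"] by (simp add: sum_distrib_right)
  also have "\<dots> = (\<Prod>k<Suc p. \<Sum>i<n. f k i)" by (simp add: prod.lessThan_Suc_shift del: prod.lessThan_Suc)
  finally show ?case .
qed

lemma prod_list_nth: "prod_list (map u js) = (\<Prod>k<length js. (u (js!k) :: real))"
  by (induction js) (auto simp: prod.lessThan_Suc_shift simp del: prod.lessThan_Suc)

lemma idx_length: "is \<in> idx n p \<Longrightarrow> length is = p" by (simp add: idx_def)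
lemma idx_nth: "is \<in> idx n p \<Longrightarrow> k < p \<Longrightarrow> is ! k < n"
  using nth_mem by (fastforce simp: idx_def)

lemma length_perm_idx[simp]: "length (perm_idx \<pi> is) = length is" by (simp add: perm_idx_def)
lemma nth_perm_idx[simp]: "k < length is \<Longrightarrow> perm_idx \<pi> is ! k = is ! \<pi> k"
  by (simp add: perm_idx_def)

lemma perm_idx_in:
  assumes "\<pi> permutes {..<p}" "is \<in> idx n p" shows "perm_idx \<pi> is \<in> idx n p"
proof -
  have "\<And>k. k < p \<Longrightarrow> \<pi> k < p" using permutes_in_image[OF assms(1)] by simp
  then show ?thesis using assms(2) unfolding idx_def
    by (auto simp: in_set_conv_nth perm_idx_def) (meson lessThan_iff nth_mem subsetD)
qed

lemma perm_idx_inv: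
  assumes "\<pi> permutes {..<p}" "length is = p"
  shows "perm_idx (inv \<pi>) (perm_idx \<pi> is) = is"
proof (rule nth_equalityI)
  fix k assume "k < length (perm_idx (inv \<pi>) (perm_idx \<pi> is))"
  then have k: "k < p" using assms by simp
  have "inv \<pi> k < p" using k permutes_in_image[OF permutes_inv[OF assms(1)], of k] by simp
  then show "perm_idx (inv \<pi>) (perm_idx \<pi> is) ! k = is ! k"
    using k assms by (simp add: permutes_inverses(1))
qed simp

lemma perm_idx_inv2:
  assumes "\<pi> permutes {..<p}" "length is = p"
  shows "perm_idx \<pi> (perm_idx (inv \<pi>) is) = is"
proof (rule nth_equalityI)
  fix k assume "k < length (perm_idx \<pi> (perm_idx (inv \<pi>) is))"
  then have k: "k < p" using assms by simp
  have "\<pi> k < p" using k permutes_in_image[OF assms(1), of k] by simp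
  then show "perm_idx \<pi> (perm_idx (inv \<pi>) is) ! k = is ! k"
    using k assms by (simp add: permutes_inverses(2))
qed simp

lemma sum_idx_perm:
  assumes "\<pi> permutes {..<p}"
  shows "(\<Sum>is\<in>idx n p. g (perm_idx \<pi> is)) = (\<Sum>is\<in>idx n p. (g is :: real))"
proof (rule sum.reindex_bij_witness[where i = "perm_idx (inv \<pi>)" and j = "perm_idx \<pi>"])
  fix a assume a: "a \<in> idx n p"
  show "perm_idx (inv \<pi>) (perm_idx \<pi> a) = a" using perm_idx_inv[OF assms] a by (simp add: idx_def)
  show "perm_idx \<pi> a \<in> idx n p" using perm_idx_in[OF assms a] .
  show "g (perm_idx \<pi> a) = g (perm_idx \<pi> a)" ..
next
  fix b assume b: "b \<in> idx n p"
  show "perm_idx \<pi> (perm_idx (inv \<pi>) b) = b" using perm_idx_inv2[OF assms] b by (simp add: idx_def)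
  show "perm_idx (inv \<pi>) b \<in> idx n p" using perm_idx_in[OF permutes_inv[OF assms] b] .
qed

definition mlf :: "nat \<Rightarrow> nat \<Rightarrow> (nat list \<Rightarrow> real) \<Rightarrow> (nat \<Rightarrow> nat \<Rightarrow> real) \<Rightarrow> real" where
  "mlf n p A ws = (\<Sum>is\<in>idx n p. A is * (\<Prod>k<p. ws k (is!k)))"

lemma prod_upd: "j < p \<Longrightarrow> (\<Prod>k<p. (h(j := a)) k (is!k)) = a (is!j) * (\<Prod>k\<in>{..<p}-{j}. h k (is!k))"
  by (subst prod.remove[of _ j]) (auto intro!: prod.cong)

lemma mlf_upd_diff: assumes j: "j < p" shows "mlf n p A (h(j := a)) - mlf n p A (h(j := b)) = mlf n p A (h(j := (\<lambda>i. a i - b i)))"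
  unfolding mlf_def sum_subtractf[symmetric]
  by (rule sum.cong[OF refl]) (simp only: prod_upd[OF j] left_diff_distrib right_diff_distrib)

lemma mlf_upd_scale: assumes j: "j < p" shows "mlf n p A (h(j := (\<lambda>i. c * a i))) = c * mlf n p A (h(j := a))"
  unfolding mlf_def sum_distrib_left
  by (rule sum.cong[OF refl]) (simp only: prod_upd[OF j] mult_ac)

lemma vnorm_L2: "vnorm n a = L2_set a {..<n}"
  by (simp add: vnorm_def vinner_def L2_set_def power2_eq_square)

lemma vnorm_nonneg[simp]: "vnorm n a \<ge> 0" by (simp add: vnorm_L2)

lemma vnorm_sq: "(vnorm n a)^2 = vinner n a a"
  by (simp add: vnorm_def vinner_def sum_nonneg)

lemma abs_le_vnorm: "i < n \<Longrightarrow> \<bar>a i\<bar> \<le> vnorm n a"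
  unfolding vnorm_L2 using member_le_L2_set[of "{..<n}" i "\<lambda>i. \<bar>a i\<bar>"]
  by (simp add: L2_set_def)

lemma vnorm_scale: "vnorm n (\<lambda>i. c * a i) = \<bar>c\<bar> * vnorm n a"
proof -
  have "vnorm n (\<lambda>i. c * a i) = vnorm n (\<lambda>i. \<bar>c\<bar> * a i)"
    by (simp add: vnorm_L2 L2_set_def power_mult_distrib)
  then show ?thesis by (simp add: vnorm_L2 L2_set_right_distrib)
qed

lemma vnorm_eq_0: "vnorm n a = 0 \<longleftrightarrow> (\<forall>i<n. a i = 0)"
  by (auto simp: vnorm_L2 L2_set_eq_0_iff)

lemma cauchy_schwarz: "\<bar>vinner n a b\<bar> \<le> vnorm n a * vnorm n b"
proof -
  have "\<bar>vinner n a b\<bar> \<le> (\<Sum>i<n. \<bar>a i\<bar> * \<bar>b i\<bar>)"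
    unfolding vinner_def by (rule order_trans[OF sum_abs]) (simp add: abs_mult)
  also have "\<dots> \<le> vnorm n a * vnorm n b" by (simp add: vnorm_L2 L2_set_mult_ineq)
  finally show ?thesis .
qed

lemma vnorm_triangle: "vnorm n (\<lambda>i. a i + b i) \<le> vnorm n a + vnorm n b"
  by (simp add: vnorm_L2 L2_set_triangle_ineq)

lemma mlf_cong: "(\<And>k. k < p \<Longrightarrow> ws k = ws' k) \<Longrightarrow> mlf n p A ws = mlf n p A ws'"
  unfolding mlf_def by (intro sum.cong refl arg_cong2[where f="(*)"] prod.cong) auto

lemma mlf_crude: 
  assumes "\<forall>k<p. vnorm n (ws k) \<le> 1"
  shows "\<bar>mlf n p A ws\<bar> \<le> (\<Sum>is\<in>idx n p. \<bar>A is\<bar>)"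
proof -
  have "\<bar>mlf n p A ws\<bar> \<le> (\<Sum>is\<in>idx n p. \<bar>A is * (\<Prod>k<p. ws k (is!k))\<bar>)"
    unfolding mlf_def by (rule sum_abs)
  also have "\<dots> \<le> (\<Sum>is\<in>idx n p. \<bar>A is\<bar>)"
  proof (rule sum_mono)
    fix "is" assume "is": "is \<in> idx n p"
    have "\<bar>\<Prod>k<p. ws k (is!k)\<bar> = (\<Prod>k<p. \<bar>ws k (is!k)\<bar>)" by (simp add: abs_prod)
    also have "\<dots> \<le> 1"
    proof (rule prod_le_1)
      fix k assume "k \<in> {..<p}"
      then show "0 \<le> \<bar>ws k (is!k)\<bar> \<and> \<bar>ws k (is!k)\<bar> \<le> 1"
        using abs_le_vnorm[OF idx_nth[OF "is"], of k "ws k"] assms by force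
    qed
    finally show "\<bar>A is * (\<Prod>k<p. ws k (is!k))\<bar> \<le> \<bar>A is\<bar>"
      by (simp add: abs_mult mult_left_le)
  qed
  finally show ?thesis .
qed

lemma net_bound:
  assumes eps: "0 < \<epsilon>" "real p * \<epsilon> \<le> 1/2"
    and net: "\<And>v. vnorm n v \<le> 1 \<Longrightarrow> \<exists>w\<in>N. vnorm n (\<lambda>i. v i - w i) \<le> \<epsilon>"
    and Nnorm: "\<And>w. w \<in> N \<Longrightarrow> vnorm n w \<le> 1"
    and bound: "\<And>ws. ws \<in> PiE {..<p} (\<lambda>_. N) \<Longrightarrow> \<bar>mlf n p A ws\<bar> \<le> t"
    and ws: "\<forall>k<p. vnorm n (ws k) \<le> 1"
  shows "\<bar>mlf n p A ws\<bar> \<le> 2 * t"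
proof -
  define S where "S = {\<bar>mlf n p A ws\<bar> | ws. \<forall>k<p. vnorm n (ws k) \<le> 1}"
  have bdd: "bdd_above S" unfolding S_def
    by (rule bdd_aboveI[where M="\<Sum>is\<in>idx n p. \<bar>A is\<bar>"]) (auto intro: mlf_crude)
  have ne: "S \<noteq> {}" using ws unfolding S_def by blast
  define M where "M = Sup S"
  have upper: "\<And>ws. \<forall>k<p. vnorm n (ws k) \<le> 1 \<Longrightarrow> \<bar>mlf n p A ws\<bar> \<le> M"
    unfolding M_def by (rule cSup_upper[OF _ bdd]) (auto simp: S_def)
  have M0: "0 \<le> M" using upper[OF ws] by linarith
  have step: "\<bar>mlf n p A ws\<bar> \<le> t + M / 2" if ws: "\<forall>k<p. vnorm n (ws k) \<le> 1" for ws
  proof -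
    define w where "w k = (SOME w. w \<in> N \<and> vnorm n (\<lambda>i. ws k i - w i) \<le> \<epsilon>)" for k
    have w: "w k \<in> N \<and> vnorm n (\<lambda>i. ws k i - w k i) \<le> \<epsilon>" if "k < p" for k
    proof -
      have "\<exists>w. w \<in> N \<and> vnorm n (\<lambda>i. ws k i - w i) \<le> \<epsilon>" using net[of "ws k"] ws that by blast
      then show ?thesis unfolding w_def by (rule someI_ex)
    qed
    define ws' where "ws' = restrict w {..<p}"
    have ws'P: "ws' \<in> PiE {..<p} (\<lambda>_. N)" unfolding ws'_def using w by (simp add: PiE_iff)
    define h where "h j = (\<lambda>k. if k < j then w k else ws k)" for j
    have tel: "mlf n p A ws - mlf n p A ws' = (\<Sum>j<p. mlf n p A (h j) - mlf n p A (h (Suc j)))"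
    proof -
      have "(\<Sum>j<p. mlf n p A (h j) - mlf n p A (h (Suc j))) = mlf n p A (h 0) - mlf n p A (h p)"
        by (rule sum_lessThan_telescope')
      moreover have "mlf n p A (h 0) = mlf n p A ws" by (rule mlf_cong) (simp add: h_def)
      moreover have "mlf n p A (h p) = mlf n p A ws'" by (rule mlf_cong) (simp add: h_def ws'_def)
      ultimately show ?thesis by simp
    qed
    have termb: "\<bar>mlf n p A (h j) - mlf n p A (h (Suc j))\<bar> \<le> \<epsilon> * M" if j: "j < p" for j
    proof -
      have e1: "h j = (h j)(j := ws j)" by (auto simp: h_def)
      have e2: "h (Suc j) = (h j)(j := w j)" by (auto simp: h_def)
      define e where "e = (\<lambda>i. ws j i - w j i)"
      have "mlf n p A (h j) - mlf n p A (h (Suc j)) = mlf n p A ((h j)(j := e))"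
        unfolding e_def by (subst e1, subst e2, rule mlf_upd_diff[OF j])
      also have "\<dots> = mlf n p A ((h j)(j := (\<lambda>i. \<epsilon> * (e i / \<epsilon>))))"
        using eps by simp
      also have "\<dots> = \<epsilon> * mlf n p A ((h j)(j := (\<lambda>i. e i / \<epsilon>)))"
        by (rule mlf_upd_scale[OF j])
      finally have eq: "mlf n p A (h j) - mlf n p A (h (Suc j)) = \<epsilon> * mlf n p A ((h j)(j := (\<lambda>i. e i / \<epsilon>)))" .
      have "\<forall>k<p. vnorm n (((h j)(j := (\<lambda>i. e i / \<epsilon>))) k) \<le> 1"
      proof (intro allI impI)
        fix k assume k: "k < p"
        show "vnorm n (((h j)(j := (\<lambda>i. e i / \<epsilon>))) k) \<le> 1"
        proof (cases "k = j")
          case True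
          have "vnorm n (\<lambda>i. e i / \<epsilon>) = vnorm n (\<lambda>i. (1/\<epsilon>) * e i)" by simp
          also have "\<dots> = (1/\<epsilon>) * vnorm n e" using eps by (simp only: vnorm_scale) simp
          also have "\<dots> \<le> 1" 
          proof -
            have "vnorm n e \<le> \<epsilon>" using w[OF j] unfolding e_def by blast
            then show ?thesis using eps by (simp add: divide_le_eq mult.commute)
          qed
          finally show ?thesis using True by simp
        next
          case False
          have "vnorm n (w k) \<le> 1" using w[OF k] Nnorm by blast
          then show ?thesis using ws k False by (cases "k < j") (simp_all add: h_def)
        qed
      qed
      then have "\<bar>mlf n p A ((h j)(j := (\<lambda>i. e i / \<epsilon>)))\<bar> \<le> M" by (rule upper)
      then show ?thesis unfolding eq using eps by (simp add: abs_mult)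
    qed
    have "\<bar>mlf n p A ws\<bar> \<le> \<bar>mlf n p A ws'\<bar> + \<bar>mlf n p A ws - mlf n p A ws'\<bar>" by linarith
    also have "\<dots> \<le> t + (\<Sum>j<p. \<epsilon> * M)"
    proof -
      have "\<bar>mlf n p A ws - mlf n p A ws'\<bar> \<le> (\<Sum>j<p. \<bar>mlf n p A (h j) - mlf n p A (h (Suc j))\<bar>)"
        unfolding tel by (rule sum_abs)
      also have "\<dots> \<le> (\<Sum>j<p. \<epsilon> * M)" by (rule sum_mono) (use termb in auto)
      finally show ?thesis using bound[OF ws'P] by linarith
    qed
    also have "\<dots> = t + real p * \<epsilon> * M" by simp
    also have "\<dots> \<le> t + M / 2" using mult_right_mono[OF eps(2) M0] by simp
    finally show ?thesis .
  qed
  have "Sup S \<le> t + M / 2"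
  proof (rule cSup_least[OF ne])
    fix x assume "x \<in> S"
    then obtain ws where "x = \<bar>mlf n p A ws\<bar>" "\<forall>k<p. vnorm n (ws k) \<le> 1" unfolding S_def by blast
    then show "x \<le> t + M / 2" using step by blast
  qed
  then have "M \<le> t + M / 2" by (simp only: M_def[symmetric])
  then show ?thesis using upper[OF ws] by linarith
qed

lemma mlf_hom_bound:
  assumes B: "\<And>ws. \<forall>k<p. vnorm n (ws k) \<le> 1 \<Longrightarrow> \<bar>mlf n p A ws\<bar> \<le> B"
  shows "\<bar>mlf n p A ws\<bar> \<le> B * (\<Prod>k<p. vnorm n (ws k))"
proof (cases "\<exists>k<p. vnorm n (ws k) = 0")
  case True
  then obtain k where k: "k < p" "vnorm n (ws k) = 0" by auto
  have "mlf n p A ws = 0" unfolding mlf_def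
  proof (rule sum.neutral, intro ballI)
    fix "is" assume "is": "is \<in> idx n p"
    have "ws k (is!k) = 0" using k idx_nth[OF "is" k(1)] by (simp add: vnorm_eq_0)
    then have "(\<Prod>k<p. ws k (is!k)) = 0" using k(1) by (intro prod_zero) auto
    then show "A is * (\<Prod>k<p. ws k (is!k)) = 0" by simp
  qed
  moreover have "(\<Prod>k<p. vnorm n (ws k)) = 0" using k by (intro prod_zero) auto
  ultimately show ?thesis by (metis abs_zero mult_zero_right order_refl)
next
  case False
  define c where "c k = vnorm n (ws k)" for k
  have c: "c k > 0" if "k < p" for k
  proof -
    have "c k \<noteq> 0" using False that c_def by auto
    then show ?thesis using vnorm_nonneg[of n "ws k"] c_def[of k] by linarith
  qed
  define ws' where "ws' k = (\<lambda>i. (1 / c k) * ws k i)" for k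
  have "\<forall>k<p. vnorm n (ws' k) \<le> 1"
  proof (intro allI impI)
    fix k assume k: "k < p"
    have "vnorm n (ws' k) = \<bar>1 / c k\<bar> * c k" unfolding ws'_def c_def by (rule vnorm_scale)
    then show "vnorm n (ws' k) \<le> 1" using c[OF k] by simp
  qed
  then have b: "\<bar>mlf n p A ws'\<bar> \<le> B" by (rule B)
  have "mlf n p A ws = (\<Prod>k<p. c k) * mlf n p A ws'"
    unfolding mlf_def sum_distrib_left
  proof (rule sum.cong[OF refl])
    fix "is" assume "is": "is \<in> idx n p"
    have "(\<Prod>k<p. ws k (is!k)) = (\<Prod>k<p. c k * ws' k (is!k))"
    proof (intro prod.cong refl)
      fix k assume "k \<in> {..<p}"
      then have "c k > 0" using c by simp
      then show "ws k (is!k) = c k * ws' k (is!k)" by (simp add: ws'_def)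
    qed
    then show "A is * (\<Prod>k<p. ws k (is!k)) = (\<Prod>k<p. c k) * (A is * (\<Prod>k<p. ws' k (is!k)))"
      by (simp add: prod.distrib)
  qed
  moreover have "(\<Prod>k<p. c k) > 0" using c by (intro prod_pos) auto
  ultimately have "\<bar>mlf n p A ws\<bar> = (\<Prod>k<p. c k) * \<bar>mlf n p A ws'\<bar>" by (simp add: abs_mult)
  also have "\<dots> \<le> (\<Prod>k<p. c k) * B" using b \<open>(\<Prod>k<p. c k) > 0\<close> by (intro mult_left_mono) auto
  finally show ?thesis by (simp add: c_def mult.commute)
qed

lemma vinner_tensor_apply:
  assumes "p \<ge> 1"
  shows "vinner n v (tensor_apply n p A u) = mlf n p A (\<lambda>k. if k = 0 then v else u)"
proof -
  obtain q where p: "p = Suc q" using assms by (cases p) auto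
  have "mlf n p A (\<lambda>k. if k = 0 then v else u)
      = (\<Sum>i<n. \<Sum>js\<in>idx n q. A (i#js) * (v i * (\<Prod>k<q. u (js!k))))"
    unfolding mlf_def p sum_idx_Suc by (simp add: prod.lessThan_Suc_shift del: prod.lessThan_Suc)
  also have "\<dots> = (\<Sum>i<n. v i * (\<Sum>js\<in>idx n q. A (i#js) * prod_list (map u js)))"
    unfolding sum_distrib_left
    by (intro sum.cong refl) (simp add: prod_list_nth idx_length)
  finally show ?thesis by (simp add: vinner_def tensor_apply_def p)
qed

lemma tensor_apply_norm:
  assumes p: "p \<ge> 1" and B0: "B \<ge> 0"
    and B: "\<And>ws. \<bar>mlf n p A ws\<bar> \<le> B * (\<Prod>k<p. vnorm n (ws k))"
  shows "vnorm n (tensor_apply n p A u) \<le> B * vnorm n u ^ (p - 1)"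
proof -
  obtain q where pq: "p = Suc q" using p by (cases p) auto
  define g where "g = tensor_apply n p A u"
  have "(vnorm n g)^2 = vinner n g g" by (rule vnorm_sq)
  also have "\<dots> = mlf n p A (\<lambda>k. if k = 0 then g else u)"
    unfolding g_def by (rule vinner_tensor_apply[OF p])
  also have "\<dots> \<le> B * (\<Prod>k<p. vnorm n (if k = 0 then g else u))" by (rule order_trans[OF abs_ge_self B])
  also have "(\<Prod>k<p. vnorm n (if k = 0 then g else u)) = vnorm n g * vnorm n u ^ (p - 1)"
    unfolding pq by (simp add: prod.lessThan_Suc_shift del: prod.lessThan_Suc)
  finally have "(vnorm n g)^2 \<le> vnorm n g * (B * vnorm n u ^ (p - 1))" by (simp add: algebra_simps)
  moreover have X0: "B * vnorm n u ^ (p - 1) \<ge> 0" using B0 by simp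
  ultimately have "vnorm n g \<le> B * vnorm n u ^ (p - 1)"
  proof (cases "vnorm n g = 0")
    case False
    then have "vnorm n g > 0" using vnorm_nonneg[of n g] by linarith
    moreover assume "(vnorm n g)^2 \<le> vnorm n g * (B * vnorm n u ^ (p - 1))"
    ultimately show ?thesis by (simp add: power2_eq_square)
  qed (use X0 in simp)
  then show ?thesis by (simp add: g_def)
qed

definition tz :: "real \<Rightarrow> int" where
  "tz y = (if y \<ge> 0 then \<lfloor>y\<rfloor> else - \<lfloor>-y\<rfloor>)"

lemma tz_abs: "\<bar>real_of_int (tz y)\<bar> \<le> \<bar>y\<bar>"
  using floor_correct[of y] floor_correct[of "-y"] unfolding tz_def by (cases "y \<ge> 0") auto

lemma tz_diff: "\<bar>y - real_of_int (tz y)\<bar> \<le> 1"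
  using floor_correct[of y] floor_correct[of "-y"] unfolding tz_def
  by (cases "y \<ge> 0") (simp_all add: abs_le_iff, linarith+)

lemma vnorm_mono: "(\<And>i. i < n \<Longrightarrow> \<bar>a i\<bar> \<le> \<bar>b i\<bar>) \<Longrightarrow> vnorm n a \<le> vnorm n b"
  unfolding vnorm_def vinner_def
proof (intro real_sqrt_le_mono sum_mono)
  fix i assume "\<And>i. i < n \<Longrightarrow> \<bar>a i\<bar> \<le> \<bar>b i\<bar>" "i \<in> {..<n}"
  then have "\<bar>a i\<bar> \<le> \<bar>b i\<bar>" by simp
  then have "\<bar>a i\<bar> * \<bar>a i\<bar> \<le> \<bar>b i\<bar> * \<bar>b i\<bar>" by (intro mult_mono) auto
  then show "a i * a i \<le> b i * b i" by (simp add: abs_mult[symmetric])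
qed

lemma vnorm_const: "vnorm n (\<lambda>_. c) = sqrt (real n) * \<bar>c\<bar>"
  unfolding vnorm_def vinner_def by (simp add: real_sqrt_mult)

lemma sum_abs_le_vnorm: "(\<Sum>i<n. \<bar>a i\<bar>) \<le> sqrt (real n) * vnorm n a"
proof -
  have "(\<Sum>i<n. \<bar>a i\<bar> * \<bar>1\<bar>) \<le> L2_set a {..<n} * L2_set (\<lambda>_. 1) {..<n}"
    by (rule L2_set_mult_ineq)
  then show ?thesis by (simp add: vnorm_L2 L2_set_constant mult.commute)
qed

definition Kset :: "nat \<Rightarrow> nat \<Rightarrow> (nat \<Rightarrow> int) set" where
  "Kset n m = {k \<in> {..<n} \<rightarrow>\<^sub>E {- int m..int m}. (\<Sum>i<n. \<bar>k i\<bar>) \<le> int m}"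

definition netv :: "nat \<Rightarrow> real \<Rightarrow> (nat \<Rightarrow> int) \<Rightarrow> nat \<Rightarrow> real" where
  "netv n \<delta> k = (\<lambda>i. if i < n then \<delta> * of_int (k i) else 0)"

definition Net :: "nat \<Rightarrow> nat \<Rightarrow> (nat \<Rightarrow> real) set" where
  "Net n p = {w \<in> netv n ((1 / (2 * real p)) / sqrt (real n)) ` Kset n (2 * p * n). vnorm n w \<le> 1}"

lemma finite_Kset: "finite (Kset n m)"
proof -
  have "Kset n m \<subseteq> {..<n} \<rightarrow>\<^sub>E {- int m..int m}" unfolding Kset_def by blast
  moreover have "finite ({..<n} \<rightarrow>\<^sub>E {- int m..int m})" by (rule finite_PiE) auto
  ultimately show ?thesis by (rule finite_subset)
qed

lemma finite_Net: "finite (Net n p)"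
  unfolding Net_def by (rule finite_subset[OF _ finite_imageI[OF finite_Kset]]) blast

lemma Net_norm: "w \<in> Net n p \<Longrightarrow> vnorm n w \<le> 1" by (simp add: Net_def)

lemma Net_approx:
  assumes n: "n \<ge> 1" and p: "p \<ge> 1" and v: "vnorm n v \<le> 1"
  shows "\<exists>w\<in>Net n p. vnorm n (\<lambda>i. v i - w i) \<le> 1 / (2 * real p)"
proof -
  define \<epsilon> where "\<epsilon> = 1 / (2 * real p)"
  define \<delta> where "\<delta> = \<epsilon> / sqrt (real n)"
  have e0: "\<epsilon> > 0" using p by (simp add: \<epsilon>_def)
  have sn: "sqrt (real n) > 0" using n by simp
  have d0: "\<delta> > 0" using e0 sn by (simp add: \<delta>_def)
  define k where "k = restrict (\<lambda>i. tz (v i / \<delta>)) {..<n}"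
  define w where "w = netv n \<delta> k"
  have wi: "\<bar>w i\<bar> \<le> \<bar>v i\<bar>" if "i < n" for i
  proof -
    have "\<bar>w i\<bar> = \<delta> * \<bar>real_of_int (tz (v i / \<delta>))\<bar>" using that d0 by (simp add: w_def netv_def k_def abs_mult)
    also have "\<dots> \<le> \<delta> * \<bar>v i / \<delta>\<bar>" using d0 tz_abs[of "v i / \<delta>"] by (intro mult_left_mono) auto
    also have "\<dots> = \<bar>v i\<bar>" using d0 by simp
    finally show ?thesis .
  qed
  have dif: "\<bar>v i - w i\<bar> \<le> \<delta>" if "i < n" for i
  proof -
    have "\<bar>v i - w i\<bar> = \<delta> * \<bar>v i / \<delta> - real_of_int (tz (v i / \<delta>))\<bar>"
    proof -
      have "v i - w i = \<delta> * (v i / \<delta> - real_of_int (tz (v i / \<delta>)))"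
        using that d0 by (simp add: w_def netv_def k_def right_diff_distrib)
      then show ?thesis using d0 by (simp add: abs_mult)
    qed
    also have "\<dots> \<le> \<delta> * 1" using d0 tz_diff[of "v i / \<delta>"] by (intro mult_left_mono) auto
    finally show ?thesis by simp
  qed
  have wn: "vnorm n w \<le> 1" using vnorm_mono[of n w v] wi v by auto
  have close: "vnorm n (\<lambda>i. v i - w i) \<le> \<epsilon>"
  proof -
    have "vnorm n (\<lambda>i. v i - w i) \<le> vnorm n (\<lambda>_. \<delta>)" using dif d0 by (intro vnorm_mono) auto
    also have "\<dots> = \<epsilon>" using d0 sn e0 by (simp add: vnorm_const \<delta>_def)
    finally show ?thesis .
  qed
  have sumk: "(\<Sum>i<n. \<bar>real_of_int (k i)\<bar>) \<le> real (2 * p * n)"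
  proof -
    have "(\<Sum>i<n. \<bar>real_of_int (k i)\<bar>) \<le> (\<Sum>i<n. \<bar>v i\<bar> / \<delta>)"
    proof (rule sum_mono)
      fix i assume i: "i \<in> {..<n}"
      have "\<bar>real_of_int (tz (v i / \<delta>))\<bar> \<le> \<bar>v i / \<delta>\<bar>" by (rule tz_abs)
      then show "\<bar>real_of_int (k i)\<bar> \<le> \<bar>v i\<bar> / \<delta>" using d0 i by (simp add: k_def abs_divide)
    qed
    also have "\<dots> = (\<Sum>i<n. \<bar>v i\<bar>) / \<delta>" by (simp add: sum_divide_distrib)
    also have "\<dots> \<le> sqrt (real n) * vnorm n v / \<delta>"
      using sum_abs_le_vnorm d0 by (intro divide_right_mono) auto
    also have "\<dots> \<le> sqrt (real n) / \<delta>" using v sn d0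
      by (intro divide_right_mono) (auto intro: mult_left_le)
    also have "\<dots> = real (2 * p * n)" using sn p n unfolding \<delta>_def \<epsilon>_def
      by (simp add: field_simps)
    finally show ?thesis .
  qed
  have sumk': "(\<Sum>i<n. \<bar>k i\<bar>) \<le> int (2 * p * n)"
  proof -
    have "real_of_int (\<Sum>i<n. \<bar>k i\<bar>) \<le> real_of_int (int (2 * p * n))" using sumk by simp
    then show ?thesis by linarith
  qed
  have kK: "k \<in> Kset n (2 * p * n)"
    unfolding Kset_def
  proof (intro CollectI conjI PiE_I)
    fix i assume i: "i \<in> {..<n}"
    have "\<bar>k i\<bar> \<le> (\<Sum>i<n. \<bar>k i\<bar>)" using i by (intro member_le_sum) auto
    then show "k i \<in> {- int (2 * p * n)..int (2 * p * n)}" using sumk' by auto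
  qed (use sumk' in \<open>auto simp: k_def\<close>)
  have "w \<in> Net n p" unfolding Net_def w_def using kK wn[unfolded w_def]
    by (auto simp: \<delta>_def \<epsilon>_def)
  then show ?thesis using close \<epsilon>_def by blast
qed

lemma geom_sum: "(\<Sum>j\<in>{- int m..int m}. (1/2::real) ^ nat \<bar>j\<bar>) = 3 - 2 * (1/2) ^ m"
proof (induction m)
  case 0 then show ?case by simp
next
  case (Suc m)
  have set: "{- int (Suc m)..int (Suc m)} = insert (- int (Suc m)) (insert (int (Suc m)) {- int m..int m})"
    by auto
  have "(\<Sum>j\<in>{- int (Suc m)..int (Suc m)}. (1/2::real) ^ nat \<bar>j\<bar>)
     = (1/2)^(Suc m) + ((1/2)^(Suc m) + (\<Sum>j\<in>{- int m..int m}. (1/2::real) ^ nat \<bar>j\<bar>))"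
  proof -
    have e1: "nat (int m + 1) = Suc m" "nat (1 + int m) = Suc m" "nat (int (Suc m)) = Suc m" by arith+
    show ?thesis unfolding set by (subst sum.insert; simp add: e1)+
  qed
  then show ?case using Suc by simp
qed

lemma card_Kset: "real (card (Kset n m)) \<le> 2 ^ m * 3 ^ n"
proof -
  have "real (card (Kset n m)) = (\<Sum>k\<in>Kset n m. 1)" by simp
  also have "\<dots> \<le> (\<Sum>k\<in>Kset n m. 2 ^ m * (\<Prod>i<n. (1/2::real) ^ nat \<bar>k i\<bar>))"
  proof (rule sum_mono)
    fix k assume k: "k \<in> Kset n m"
    have "(\<Sum>i<n. nat \<bar>k i\<bar>) \<le> m"
    proof -
      have "int (\<Sum>i<n. nat \<bar>k i\<bar>) = (\<Sum>i<n. int (nat \<bar>k i\<bar>))" by (rule of_nat_sum)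
      also have "\<dots> = (\<Sum>i<n. \<bar>k i\<bar>)" by simp
      finally have "int (\<Sum>i<n. nat \<bar>k i\<bar>) \<le> int m" using k by (simp add: Kset_def)
      then show ?thesis by linarith
    qed
    then have "(1/2::real) ^ m \<le> (1/2) ^ (\<Sum>i<n. nat \<bar>k i\<bar>)" by (intro power_decreasing) auto
    also have "\<dots> = (\<Prod>i<n. (1/2::real) ^ nat \<bar>k i\<bar>)" by (simp add: power_sum)
    finally have "(2::real)^m * (1/2)^m \<le> 2^m * (\<Prod>i<n. (1/2::real) ^ nat \<bar>k i\<bar>)" by simp
    then show "1 \<le> 2 ^ m * (\<Prod>i<n. (1/2::real) ^ nat \<bar>k i\<bar>)" by (simp add: power_one_over)
  qed
  also have "\<dots> \<le> (\<Sum>k\<in>{..<n} \<rightarrow>\<^sub>E {- int m..int m}. 2 ^ m * (\<Prod>i<n. (1/2::real) ^ nat \<bar>k i\<bar>))"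
  proof (rule sum_mono2)
    show "finite ({..<n} \<rightarrow>\<^sub>E {- int m..int m})" by (rule finite_PiE) auto
    show "Kset n m \<subseteq> {..<n} \<rightarrow>\<^sub>E {- int m..int m}" unfolding Kset_def by blast
    show "0 \<le> 2 ^ m * (\<Prod>i<n. (1/2::real) ^ nat \<bar>k i\<bar>)" for k
      by (intro mult_nonneg_nonneg prod_nonneg) auto
  qed
  also have "\<dots> = 2 ^ m * (\<Sum>k\<in>{..<n} \<rightarrow>\<^sub>E {- int m..int m}. (\<Prod>i<n. (1/2::real) ^ nat \<bar>k i\<bar>))"
    by (rule sum_distrib_left[symmetric])
  also have "\<dots> = 2 ^ m * (\<Prod>i<n. \<Sum>j\<in>{- int m..int m}. (1/2::real) ^ nat \<bar>j\<bar>)"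
    by (subst prod_sum_PiE) auto
  also have "\<dots> \<le> 2 ^ m * (\<Prod>i<n. 3)"
  proof (intro mult_left_mono prod_mono conjI)
    fix i
    show "0 \<le> (\<Sum>j\<in>{- int m..int m}. (1/2::real) ^ nat \<bar>j\<bar>)" by (intro sum_nonneg) auto
    show "(\<Sum>j\<in>{- int m..int m}. (1/2::real) ^ nat \<bar>j\<bar>) \<le> 3" unfolding geom_sum by simp
  qed simp
  finally show ?thesis by simp
qed

lemma card_Net: "real (card (Net n p)) \<le> 2 ^ (2 * p * n) * 3 ^ n"
proof -
  have "card (Net n p) \<le> card (netv n ((1 / (2 * real p)) / sqrt (real n)) ` Kset n (2 * p * n))"
    unfolding Net_def by (intro card_mono finite_imageI finite_Kset) auto
  also have "\<dots> \<le> card (Kset n (2 * p * n))" by (rule card_image_le[OF finite_Kset])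
  finally show ?thesis using card_Kset[of n "2 * p * n"] by linarith
qed

lemma prob_space_std_gauss: "prob_space std_gauss"
  unfolding std_gauss_def by (rule prob_space_normal_density) simp

lemma sets_std_gauss[measurable_cong]: "sets std_gauss = sets borel"
  by (simp add: std_gauss_def)

lemma gauss_density_shift:
  "std_normal_density x * exp (a * x) = exp (a^2/2) * normal_density a 1 x"
proof -
  have "- x\<^sup>2 / 2 + a * x = a^2/2 + (-(x - a)\<^sup>2 / 2)" by (simp add: power2_eq_square field_simps)
  then have "exp (- x\<^sup>2 / 2) * exp (a * x) = exp (a^2/2) * exp (-(x - a)\<^sup>2 / 2)"
    by (simp flip: exp_add)
  then show ?thesis unfolding std_normal_density_def normal_density_def by simp
qed

lemma gauss_mgf: "(\<integral>\<^sup>+x. ennreal (exp (a * x)) \<partial>std_gauss) = ennreal (exp (a^2/2))"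
proof -
  have "(\<integral>\<^sup>+x. ennreal (exp (a * x)) \<partial>std_gauss)
      = (\<integral>\<^sup>+x. ennreal (std_normal_density x) * ennreal (exp (a * x)) \<partial>lborel)"
    unfolding std_gauss_def by (rule nn_integral_density) auto
  also have "\<dots> = (\<integral>\<^sup>+x. ennreal (exp (a^2/2)) * ennreal (normal_density a 1 x) \<partial>lborel)"
    by (intro nn_integral_cong)
       (simp add: gauss_density_shift[symmetric] ennreal_mult[symmetric])
  also have "\<dots> = ennreal (exp (a^2/2)) * (\<integral>\<^sup>+x. ennreal (normal_density a 1 x) \<partial>lborel)"
    by (rule nn_integral_cmult) auto
  also have "(\<integral>\<^sup>+x. ennreal (normal_density a 1 x) \<partial>lborel) = 1"
    by (subst nn_integral_eq_integral) auto
  finally show ?thesis by simp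
qed

abbreviation GM :: "'i set \<Rightarrow> ('i \<Rightarrow> real) measure" where
  "GM I \<equiv> PiM I (\<lambda>_. std_gauss)"

lemma product_prob_space_gauss: "product_prob_space (\<lambda>_::'i. std_gauss)"
proof -
  interpret prob_space std_gauss by (rule prob_space_std_gauss)
  show ?thesis by unfold_locales
qed

lemma prob_space_GM: "prob_space (GM I)"
proof -
  interpret product_prob_space "\<lambda>_. std_gauss" by (rule product_prob_space_gauss)
  show ?thesis by (rule prob_space_PiM) (rule prob_space_std_gauss)
qed

lemma GM_comp_meas: "j \<in> I \<Longrightarrow> (\<lambda>G. G j) \<in> borel_measurable (GM I)"
  using measurable_component_singleton[of j I "\<lambda>_. std_gauss"]
  by (simp add: measurable_cong_sets[OF refl sets_std_gauss])

lemma lin_meas: "finite I \<Longrightarrow> (\<lambda>G. \<Sum>j\<in>I. G j * d j) \<in> borel_measurable (GM I)"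
  by (intro borel_measurable_sum borel_measurable_times GM_comp_meas) auto

lemma lin_mgf:
  assumes I: "finite I"
  shows "(\<integral>\<^sup>+G. ennreal (exp (s * (\<Sum>j\<in>I. G j * d j))) \<partial>GM I) = ennreal (exp (s^2 * (\<Sum>j\<in>I. (d j)^2) / 2))"
proof -
  interpret product_prob_space "\<lambda>_. std_gauss" by (rule product_prob_space_gauss)
  have "(\<integral>\<^sup>+G. ennreal (exp (s * (\<Sum>j\<in>I. G j * d j))) \<partial>GM I)
      = (\<integral>\<^sup>+G. (\<Prod>j\<in>I. (\<lambda>j x. ennreal (exp ((s * d j) * x))) j (G j)) \<partial>GM I)"
  proof (intro nn_integral_cong)
    fix G :: "'a \<Rightarrow> real"
    have "exp (s * (\<Sum>j\<in>I. G j * d j)) = (\<Prod>j\<in>I. exp (s * d j * G j))"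
      by (simp add: sum_distrib_left exp_sum[OF I, symmetric] algebra_simps)
    then show "ennreal (exp (s * (\<Sum>j\<in>I. G j * d j))) = (\<Prod>j\<in>I. (\<lambda>j x. ennreal (exp ((s * d j) * x))) j (G j))"
      by (simp add: prod_ennreal)
  qed
  also have "\<dots> = (\<Prod>j\<in>I. \<integral>\<^sup>+x. ennreal (exp ((s * d j) * x)) \<partial>std_gauss)"
    by (rule product_nn_integral_prod[OF I]) (simp add: measurable_cong_sets[OF refl sets_std_gauss])
  also have "\<dots> = (\<Prod>j\<in>I. ennreal (exp ((s * d j)^2 / 2)))" by (simp add: gauss_mgf)
  also have "\<dots> = ennreal (\<Prod>j\<in>I. exp ((s * d j)^2 / 2))" by (simp add: prod_ennreal)
  also have "(\<Prod>j\<in>I. exp ((s * d j)^2 / 2)) = exp (\<Sum>j\<in>I. (s * d j)^2 / 2)" by (simp add: exp_sum[OF I])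
  also have "(\<Sum>j\<in>I. (s * d j)^2 / 2) = s^2 * (\<Sum>j\<in>I. (d j)^2) / 2"
    by (simp add: power_mult_distrib sum_distrib_left sum_divide_distrib)
  finally show ?thesis .
qed

lemma lin_tail_one:
  assumes I: "finite I" and D: "D > 0" "(\<Sum>j\<in>I. (d j)^2) \<le> D" and t: "t \<ge> 0"
  shows "measure (GM I) {G \<in> space (GM I). (\<Sum>j\<in>I. G j * d j) \<ge> t} \<le> exp (- (t^2) / (2 * D))"
proof -
  interpret prob_space "GM I" by (rule prob_space_GM)
  define X where "X G = (\<Sum>j\<in>I. G j * d j)" for G :: "'a \<Rightarrow> real"
  define s where "s = t / D"
  have s0: "s \<ge> 0" using D t by (simp add: s_def)
  have Xm: "X \<in> borel_measurable (GM I)" unfolding X_def by (rule lin_meas[OF I])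
  define A where "A = {G \<in> space (GM I). X G \<ge> t}"
  have Am: "A \<in> sets (GM I)" unfolding A_def using Xm by measurable
  have "ennreal (measure (GM I) A) = emeasure (GM I) A" by (simp add: emeasure_eq_measure)
  also have "\<dots> = (\<integral>\<^sup>+G. indicator A G \<partial>GM I)" using Am by simp
  also have "\<dots> \<le> (\<integral>\<^sup>+G. ennreal (exp (- s * t)) * ennreal (exp (s * X G)) \<partial>GM I)"
  proof (rule nn_integral_mono)
    fix G assume "G \<in> space (GM I)"
    show "indicator A G \<le> ennreal (exp (- s * t)) * ennreal (exp (s * X G))"
    proof (cases "G \<in> A")
      case True
      then have "X G \<ge> t" by (simp add: A_def)
      then have "s * X G - s * t \<ge> 0" using s0 by (simp add: mult_left_mono flip: right_diff_distrib)
      then have "1 \<le> exp (- s * t) * exp (s * X G)" by (simp flip: exp_add)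
      then show ?thesis using True by (simp flip: ennreal_mult)
    qed simp
  qed
  also have "\<dots> = ennreal (exp (- s * t)) * (\<integral>\<^sup>+G. ennreal (exp (s * X G)) \<partial>GM I)"
    by (rule nn_integral_cmult) (use Xm in measurable)
  also have "(\<integral>\<^sup>+G. ennreal (exp (s * X G)) \<partial>GM I) = ennreal (exp (s^2 * (\<Sum>j\<in>I. (d j)^2) / 2))"
    unfolding X_def by (rule lin_mgf[OF I])
  also have "ennreal (exp (- s * t)) * ennreal (exp (s^2 * (\<Sum>j\<in>I. (d j)^2) / 2))
      = ennreal (exp (- s * t + s^2 * (\<Sum>j\<in>I. (d j)^2) / 2))"
    by (simp only: exp_add ennreal_mult exp_ge_zero)
  also have "\<dots> \<le> ennreal (exp (- (t^2) / (2 * D)))"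
  proof (rule ennreal_leI, subst exp_le_cancel_iff)
    have "s^2 * (\<Sum>j\<in>I. (d j)^2) / 2 \<le> s^2 * D / 2" using D by (simp add: mult_left_mono)
    moreover have "- s * t + s^2 * D / 2 = - (t^2) / (2 * D)" using D
      by (simp add: s_def power2_eq_square field_simps)
    ultimately show "- s * t + s^2 * (\<Sum>j\<in>I. (d j)^2) / 2 \<le> - (t^2) / (2 * D)" by linarith
  qed
  finally have "measure (GM I) A \<le> exp (- (t^2) / (2 * D))" by (simp add: ennreal_le_iff)
  then show ?thesis by (simp add: A_def X_def)
qed

lemma lin_tail:
  assumes I: "finite I" and D: "D > 0" "(\<Sum>j\<in>I. (d j)^2) \<le> D" and t: "t \<ge> 0"
  shows "measure (GM I) {G \<in> space (GM I). \<bar>\<Sum>j\<in>I. G j * d j\<bar> > t} \<le> 2 * exp (- (t^2) / (2 * D))"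
proof -
  interpret prob_space "GM I" by (rule prob_space_GM)
  have m1: "{G \<in> space (GM I). (\<Sum>j\<in>I. G j * d j) \<ge> t} \<in> sets (GM I)"
    using lin_meas[OF I, of d] by measurable
  have m2: "{G \<in> space (GM I). (\<Sum>j\<in>I. G j * (- d j)) \<ge> t} \<in> sets (GM I)"
    using lin_meas[OF I, of "\<lambda>j. - d j"] by measurable
  have D2: "(\<Sum>j\<in>I. (- d j)^2) \<le> D" using D by simp
  have "measure (GM I) {G \<in> space (GM I). \<bar>\<Sum>j\<in>I. G j * d j\<bar> > t}
     \<le> measure (GM I) ({G \<in> space (GM I). (\<Sum>j\<in>I. G j * d j) \<ge> t} \<union> {G \<in> space (GM I). (\<Sum>j\<in>I. G j * (- d j)) \<ge> t})"
    by (rule finite_measure_mono) (auto simp: sum_negf m1 m2)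
  also have "\<dots> \<le> measure (GM I) {G \<in> space (GM I). (\<Sum>j\<in>I. G j * d j) \<ge> t} + measure (GM I) {G \<in> space (GM I). (\<Sum>j\<in>I. G j * (- d j)) \<ge> t}"
    by (rule measure_Un_le[OF m1 m2])
  also have "\<dots> \<le> exp (- (t^2) / (2 * D)) + exp (- (t^2) / (2 * D))"
    using lin_tail_one[OF I D t] lin_tail_one[OF I D(1) D2 t] by (intro add_mono)
  finally show ?thesis by simp
qed

definition coef :: "nat \<Rightarrow> (nat \<Rightarrow> nat \<Rightarrow> real) \<Rightarrow> nat list \<Rightarrow> real" where
  "coef p ws is = (\<Prod>k<p. ws k (is!k))"

definition dco :: "nat \<Rightarrow> (nat \<Rightarrow> nat \<Rightarrow> real) \<Rightarrow> nat list \<Rightarrow> real" where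
  "dco p ws js = (1 / sqrt (fact p)) * (\<Sum>\<pi>\<in>{\<pi>. \<pi> permutes {..<p}}. coef p ws (perm_idx (inv \<pi>) js))"

lemma finite_perms: "finite {\<pi>. \<pi> permutes {..<(p::nat)}}"
  using finite_permutations[of "{..<p}"] by simp

lemma card_perms: "card {\<pi>. \<pi> permutes {..<(p::nat)}} = fact p"
  by (rule card_permutations) simp_all

lemma sum_perm_shift:
  fixes Gt c :: "nat list \<Rightarrow> real"
  assumes \<pi>: "\<pi> permutes {..<p}"
  shows "(\<Sum>is\<in>idx n p. Gt (perm_idx \<pi> is) * c is) = (\<Sum>js\<in>idx n p. Gt js * c (perm_idx (inv \<pi>) js))"
proof -
  have "(\<Sum>is\<in>idx n p. Gt (perm_idx \<pi> is) * c is)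
      = (\<Sum>is\<in>idx n p. (\<lambda>js. Gt js * c (perm_idx (inv \<pi>) js)) (perm_idx \<pi> is))"
    by (intro sum.cong refl) (simp add: perm_idx_inv[OF \<pi>] idx_length)
  also have "\<dots> = (\<Sum>js\<in>idx n p. Gt js * c (perm_idx (inv \<pi>) js))"
    using sum_idx_perm[OF \<pi>, of "\<lambda>js. Gt js * c (perm_idx (inv \<pi>) js)"] by simp
  finally show ?thesis .
qed

lemma mlf_sym: "mlf n p (sym_noise p Gt) ws = (\<Sum>js\<in>idx n p. Gt js * dco p ws js)"
proof -
  let ?P = "{\<pi>. \<pi> permutes {..<p}}"
  let ?a = "1 / sqrt (fact p) :: real"
  have "mlf n p (sym_noise p Gt) ws = (\<Sum>is\<in>idx n p. \<Sum>\<pi>\<in>?P. ?a * (Gt (perm_idx \<pi> is) * coef p ws is))"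
    unfolding mlf_def sym_noise_def coef_def
    by (intro sum.cong refl) (simp add: sum_distrib_left sum_distrib_right mult.assoc)
  also have "\<dots> = (\<Sum>\<pi>\<in>?P. \<Sum>is\<in>idx n p. ?a * (Gt (perm_idx \<pi> is) * coef p ws is))"
    by (rule sum.swap)
  also have "\<dots> = (\<Sum>\<pi>\<in>?P. ?a * (\<Sum>is\<in>idx n p. Gt (perm_idx \<pi> is) * coef p ws is))"
    by (simp only: sum_distrib_left)
  also have "\<dots> = (\<Sum>\<pi>\<in>?P. ?a * (\<Sum>js\<in>idx n p. Gt js * coef p ws (perm_idx (inv \<pi>) js)))"
    by (intro sum.cong refl arg_cong[where f="\<lambda>x. ?a * x"] sum_perm_shift) simp
  also have "\<dots> = (\<Sum>\<pi>\<in>?P. \<Sum>js\<in>idx n p. Gt js * (?a * coef p ws (perm_idx (inv \<pi>) js)))"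
    by (simp only: sum_distrib_left mult_ac)
  also have "\<dots> = (\<Sum>js\<in>idx n p. \<Sum>\<pi>\<in>?P. Gt js * (?a * coef p ws (perm_idx (inv \<pi>) js)))"
    by (rule sum.swap)
  also have "\<dots> = (\<Sum>js\<in>idx n p. Gt js * dco p ws js)"
    unfolding dco_def by (simp only: sum_distrib_left)
  finally show ?thesis .
qed

lemma sq_sum_le: "finite A \<Longrightarrow> (\<Sum>x\<in>A. f x)^2 \<le> real (card A) * (\<Sum>x\<in>A. (f x)^2)"
proof -
  assume A: "finite A"
  have "\<bar>\<Sum>x\<in>A. f x\<bar> \<le> (\<Sum>x\<in>A. \<bar>f x\<bar> * \<bar>1\<bar>)" by (simp add: sum_abs)
  also have "\<dots> \<le> L2_set f A * L2_set (\<lambda>_. 1) A" by (rule L2_set_mult_ineq)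
  also have "\<dots> = sqrt (\<Sum>x\<in>A. (f x)^2) * sqrt (real (card A))"
    by (simp add: L2_set_def L2_set_constant)
  finally have "(\<Sum>x\<in>A. f x)^2 \<le> (sqrt (\<Sum>x\<in>A. (f x)^2) * sqrt (real (card A)))^2"
    by (metis abs_ge_zero power2_abs power_mono)
  also have "\<dots> = (\<Sum>x\<in>A. (f x)^2) * real (card A)"
    by (simp add: power_mult_distrib sum_nonneg)
  finally show ?thesis by (simp add: mult.commute)
qed

lemma dco_sq:
  assumes ws: "\<forall>k<p. vnorm n (ws k) \<le> 1"
  shows "(\<Sum>js\<in>idx n p. (dco p ws js)^2) \<le> fact p"
proof -
  let ?P = "{\<pi>. \<pi> permutes {..<p}}"
  have fp: "(fact p :: real) > 0" by simp
  have "(\<Sum>js\<in>idx n p. (dco p ws js)^2)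
      \<le> (\<Sum>js\<in>idx n p. \<Sum>\<pi>\<in>?P. (coef p ws (perm_idx (inv \<pi>) js))^2)"
  proof (rule sum_mono)
    fix js
    have "(dco p ws js)^2 = (1 / fact p) * (\<Sum>\<pi>\<in>?P. coef p ws (perm_idx (inv \<pi>) js))^2"
      unfolding dco_def by (simp add: power_mult_distrib power_divide real_sqrt_pow2)
    also have "\<dots> \<le> (1 / fact p) * (real (card ?P) * (\<Sum>\<pi>\<in>?P. (coef p ws (perm_idx (inv \<pi>) js))^2))"
      by (intro mult_left_mono sq_sum_le finite_perms) simp
    also have "\<dots> = (\<Sum>\<pi>\<in>?P. (coef p ws (perm_idx (inv \<pi>) js))^2)"
      using fp by (simp add: card_perms)
    finally show "(dco p ws js)^2 \<le> (\<Sum>\<pi>\<in>?P. (coef p ws (perm_idx (inv \<pi>) js))^2)" .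
  qed
  also have "\<dots> = (\<Sum>\<pi>\<in>?P. \<Sum>js\<in>idx n p. (coef p ws (perm_idx (inv \<pi>) js))^2)"
    by (rule sum.swap)
  also have "\<dots> = (\<Sum>\<pi>\<in>?P. \<Sum>js\<in>idx n p. (coef p ws js)^2)"
    by (intro sum.cong refl sum_idx_perm permutes_inv) simp
  also have "\<dots> = fact p * (\<Sum>js\<in>idx n p. (coef p ws js)^2)" by (simp add: card_perms)
  also have "(\<Sum>js\<in>idx n p. (coef p ws js)^2) = (\<Prod>k<p. \<Sum>i<n. (ws k i)^2)"
    unfolding coef_def prod_power_distrib by (rule sum_idx_prod)
  also have "\<dots> \<le> 1"
  proof (rule prod_le_1)
    fix k assume k: "k \<in> {..<p}"
    have "(\<Sum>i<n. (ws k i)^2) = vinner n (ws k) (ws k)" by (simp add: vinner_def power2_eq_square)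
    also have "\<dots> = (vnorm n (ws k))^2" by (rule vnorm_sq[symmetric])
    also have "\<dots> \<le> 1" using ws k by (simp add: power_le_one)
    finally show "0 \<le> (\<Sum>i<n. (ws k i)^2) \<and> (\<Sum>i<n. (ws k i)^2) \<le> 1" by (simp add: sum_nonneg)
  qed
  finally show ?thesis using fp by simp
qed

definition Wset :: "nat \<Rightarrow> nat \<Rightarrow> (nat \<Rightarrow> nat \<Rightarrow> real) set" where
  "Wset n p = PiE {..<p} (\<lambda>_. Net n p)"

lemma finite_Wset: "finite (Wset n p)"
  unfolding Wset_def by (rule finite_PiE) (simp_all add: finite_Net)

lemma Wset_norm: "ws \<in> Wset n p \<Longrightarrow> \<forall>k<p. vnorm n (ws k) \<le> 1"
  unfolding Wset_def using Net_norm by (auto simp: PiE_iff)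

lemma exp2_ge4: "(4::real) \<le> exp 2"
proof -
  have "(2::real) \<le> exp 1" using exp_ge_add_one_self[of 1] by simp
  then have "(2::real)^2 \<le> (exp 1)^2" by (intro power_mono) auto
  also have "(exp 1)^2 = exp (2::real)" by (simp flip: exp_of_nat_mult)
  finally show ?thesis by simp
qed

lemma card_Wset: "real (card (Wset n p)) \<le> exp (2 * real p * (real p + 1) * real n)"
proof -
  have b: "real (card (Net n p)) \<le> exp (real ((p + 1) * n) * 2)"
  proof -
    have "real (card (Net n p)) \<le> 2 ^ (2 * p * n) * 3 ^ n" by (rule card_Net)
    also have "(2::real) ^ (2 * p * n) * 3 ^ n \<le> 4 ^ (p * n) * 4 ^ n"
    proof (intro mult_mono power_mono)
      have "(2::real) ^ (2 * p * n) = 4 ^ (p * n)" by (simp add: power_mult)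
      then show "(2::real) ^ (2 * p * n) \<le> 4 ^ (p * n)" by simp
    qed auto
    also have "(4::real) ^ (p * n) * 4 ^ n = 4 ^ ((p + 1) * n)" by (simp add: power_add algebra_simps)
    also have "\<dots> \<le> (exp 2) ^ ((p + 1) * n)" by (intro power_mono exp2_ge4) simp
    also have "\<dots> = exp (real ((p + 1) * n) * 2)" by (rule exp_of_nat_mult[symmetric])
    finally show ?thesis .
  qed
  have "real (card (Wset n p)) = real (card (Net n p)) ^ p"
    unfolding Wset_def by (simp add: card_PiE)
  also have "\<dots> \<le> (exp (real ((p + 1) * n) * 2)) ^ p" by (intro power_mono b) simp
  also have "\<dots> = exp (real p * (real ((p + 1) * n) * 2))" by (rule exp_of_nat_mult[symmetric])
  also have "real p * (real ((p + 1) * n) * 2) = 2 * real p * (real p + 1) * real n" by (simp add: algebra_simps)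
  finally show ?thesis .
qed

definition Bset :: "nat \<Rightarrow> nat \<Rightarrow> real \<Rightarrow> (nat list \<Rightarrow> real) set" where
  "Bset n p t = {Gt \<in> space (gauss_tensor n p). \<forall>ws\<in>Wset n p. \<bar>\<Sum>js\<in>idx n p. Gt js * dco p ws js\<bar> \<le> t}"

lemma Bset_sets: "Bset n p t \<in> sets (gauss_tensor n p)"
proof -
  have "Bset n p t = space (gauss_tensor n p) - (\<Union>ws\<in>Wset n p. {Gt \<in> space (gauss_tensor n p). \<bar>\<Sum>js\<in>idx n p. Gt js * dco p ws js\<bar> > t})"
    unfolding Bset_def by auto
  also have "\<dots> \<in> sets (gauss_tensor n p)"
    unfolding gauss_tensor_def
    by (intro sets.compl_sets sets.finite_UN finite_Wset) (use lin_meas[OF finite_idx] in measurable)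
  finally show ?thesis .
qed

lemma Bset_prob:
  assumes t: "t \<ge> 0"
  shows "measure (gauss_tensor n p) (Bset n p t) \<ge> 1 - real (card (Wset n p)) * (2 * exp (- (t^2) / (2 * fact p)))"
proof -
  interpret prob_space "gauss_tensor n p" unfolding gauss_tensor_def by (rule prob_space_GM)
  define bad where "bad ws = {Gt \<in> space (gauss_tensor n p). \<bar>\<Sum>js\<in>idx n p. Gt js * dco p ws js\<bar> > t}" for ws
  have badm: "bad ws \<in> sets (gauss_tensor n p)" for ws
    unfolding bad_def gauss_tensor_def using lin_meas[OF finite_idx] by measurable
  have eq: "space (gauss_tensor n p) - Bset n p t = (\<Union>ws\<in>Wset n p. bad ws)"
    unfolding Bset_def bad_def by auto
  have "measure (gauss_tensor n p) (\<Union>ws\<in>Wset n p. bad ws) \<le> (\<Sum>ws\<in>Wset n p. measure (gauss_tensor n p) (bad ws))"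
    by (rule measure_UNION_le[OF finite_Wset badm])
  also have "\<dots> \<le> (\<Sum>ws\<in>Wset n p. 2 * exp (- (t^2) / (2 * fact p)))"
  proof (rule sum_mono)
    fix ws assume ws: "ws \<in> Wset n p"
    show "measure (gauss_tensor n p) (bad ws) \<le> 2 * exp (- (t^2) / (2 * fact p))"
      unfolding bad_def gauss_tensor_def
      by (rule lin_tail[OF finite_idx _ dco_sq[OF Wset_norm[OF ws]] t]) simp
  qed
  also have "\<dots> = real (card (Wset n p)) * (2 * exp (- (t^2) / (2 * fact p)))" by simp
  finally have "measure (gauss_tensor n p) (space (gauss_tensor n p) - Bset n p t) \<le> real (card (Wset n p)) * (2 * exp (- (t^2) / (2 * fact p)))"
    using eq by simp
  then show ?thesis using prob_compl[OF Bset_sets] by simp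
qed

lemma Bset_bound:
  assumes n: "n \<ge> 1" and p: "p \<ge> 1" and G: "Gt \<in> Bset n p t"
    and ws: "\<forall>k<p. vnorm n (ws k) \<le> 1"
  shows "\<bar>mlf n p (sym_noise p Gt) ws\<bar> \<le> 2 * t"
proof (rule net_bound[where \<epsilon>="1 / (2 * real p)" and N="Net n p"])
  show "0 < 1 / (2 * real p)" using p by simp
  show "real p * (1 / (2 * real p)) \<le> 1/2" using p by simp
  show "\<exists>w\<in>Net n p. vnorm n (\<lambda>i. v i - w i) \<le> 1 / (2 * real p)" if "vnorm n v \<le> 1" for v
    by (rule Net_approx[OF n p that])
  show "vnorm n w \<le> 1" if "w \<in> Net n p" for w using Net_norm that .
  show "\<bar>mlf n p (sym_noise p Gt) ws\<bar> \<le> t" if "ws \<in> PiE {..<p} (\<lambda>_. Net n p)" for ws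
    using G that unfolding mlf_sym Bset_def Wset_def by blast
qed (rule ws)

lemma vinner_comm: "vinner n a b = vinner n b a"
  unfolding vinner_def by (simp add: mult.commute)

lemma vinner_cong: "(\<And>i. i < n \<Longrightarrow> a i = a' i) \<Longrightarrow> vinner n a b = vinner n a' b"
  unfolding vinner_def by (intro sum.cong) auto

lemma vnorm_cong: "(\<And>i. i < n \<Longrightarrow> a i = a' i) \<Longrightarrow> vnorm n a = vnorm n a'"
  unfolding vnorm_def vinner_def by (intro arg_cong[where f=sqrt] sum.cong) auto

lemma sum_idx_prodlist: "(\<Sum>js\<in>idx n q. prod_list (map x js) * prod_list (map u js)) = (vinner n x u)^q"
proof -
  have "(\<Sum>js\<in>idx n q. prod_list (map x js) * prod_list (map u js)) = (\<Sum>js\<in>idx n q. \<Prod>k<q. x (js!k) * u (js!k))"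
    by (intro sum.cong refl) (simp add: prod_list_nth idx_length prod.distrib)
  also have "\<dots> = (\<Prod>k<q. \<Sum>i<n. x i * u i)" by (rule sum_idx_prod)
  finally show ?thesis by (simp add: vinner_def)
qed

lemma tensor_apply_spiked:
  assumes p: "p \<ge> 1"
  shows "tensor_apply n p (spiked_tensor p lam x Gt) u i
       = lam * (vinner n x u)^(p-1) * x i + tensor_apply n p (sym_noise p Gt) u i"
proof -
  have "tensor_apply n p (spiked_tensor p lam x Gt) u i
      = (\<Sum>js\<in>idx n (p-1). lam * x i * (prod_list (map x js) * prod_list (map u js)) + sym_noise p Gt (i#js) * prod_list (map u js))"
    unfolding tensor_apply_def spiked_tensor_def by (intro sum.cong refl) (simp add: algebra_simps)
  also have "\<dots> = lam * x i * (\<Sum>js\<in>idx n (p-1). prod_list (map x js) * prod_list (map u js)) + tensor_apply n p (sym_noise p Gt) u i"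
    unfolding tensor_apply_def by (simp add: sum.distrib sum_distrib_left)
  finally show ?thesis by (simp add: sum_idx_prodlist)
qed

lemma corr_nonneg: "corr n a b \<ge> 0"
  unfolding corr_def by simp

lemma corr_lb:
  assumes X: "vnorm n x > 0" and A: "\<bar>a\<bar> * vnorm n x > 0" and g: "vnorm n g \<le> G"
    and y: "\<And>i. i < n \<Longrightarrow> y i = a * x i + g i"
  shows "corr n y x \<ge> 1 - 2 * G / (\<bar>a\<bar> * vnorm n x)"
proof -
  define Xn where "Xn = vnorm n x"
  define Am where "Am = \<bar>a\<bar> * Xn"
  have G0: "G \<ge> 0" using g vnorm_nonneg[of n g] by linarith
  have Am0: "Am > 0" using A by (simp add: Am_def Xn_def)
  show ?thesis
  proof (cases "Am \<le> G")
    case True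
    then have "1 - 2 * G / Am \<le> 0" using Am0 by (simp add: field_simps)
    then show ?thesis using corr_nonneg[of n y x] by (simp add: Am_def Xn_def)
  next
    case False
    have ip: "vinner n y x = a * Xn^2 + vinner n g x"
    proof -
      have "vinner n y x = (\<Sum>i<n. a * (x i * x i) + g i * x i)"
        unfolding vinner_def using y by (intro sum.cong) (auto simp: algebra_simps)
      also have "\<dots> = a * vinner n x x + vinner n g x" by (simp add: vinner_def sum.distrib sum_distrib_left)
      finally show ?thesis by (simp add: Xn_def vnorm_sq)
    qed
    have cs: "\<bar>vinner n g x\<bar> \<le> G * Xn"
    proof -
      have "vnorm n g * Xn \<le> G * Xn" using g by (intro mult_right_mono) (simp_all add: Xn_def)
      then show ?thesis using cauchy_schwarz[of n g x] by (simp add: Xn_def)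
    qed
    have lo: "\<bar>vinner n y x\<bar> \<ge> (Am - G) * Xn"
    proof -
      have "\<bar>a * Xn^2\<bar> = Am * Xn" by (simp add: Am_def abs_mult power2_eq_square Xn_def)
      then show ?thesis using ip cs by (simp add: algebra_simps)
    qed
    have ny: "vnorm n y \<le> Am + G"
    proof -
      have "vnorm n y = vnorm n (\<lambda>i. a * x i + g i)" using y by (intro vnorm_cong) auto
      also have "\<dots> \<le> vnorm n (\<lambda>i. a * x i) + vnorm n g" by (rule vnorm_triangle)
      also have "\<dots> \<le> Am + G" using g by (simp add: vnorm_scale Am_def Xn_def)
      finally show ?thesis .
    qed
    have Xp: "Xn > 0" using X by (simp add: Xn_def)
    have pos: "(Am - G) * Xn > 0" using False Xp by simp
    have nyp: "vnorm n y > 0"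
    proof (rule ccontr)
      assume "\<not> vnorm n y > 0"
      then have "vnorm n y = 0" using vnorm_nonneg[of n y] by linarith
      then have "vinner n y x = 0" using cauchy_schwarz[of n y x] by simp
      then show False using lo pos by simp
    qed
    have "corr n y x = \<bar>vinner n y x\<bar> / (vnorm n y * Xn)" by (simp add: corr_def Xn_def)
    also have "\<dots> \<ge> (Am - G) * Xn / ((Am + G) * Xn)"
      using lo ny nyp Xp pos by (intro frac_le mult_right_mono) auto
    finally have c1: "corr n y x \<ge> (Am - G) / (Am + G)" using Xp by simp
    have "(Am - G) / (Am + G) \<ge> 1 - 2 * G / Am"
      using Am0 G0 by (simp add: field_simps)
    then show ?thesis using c1 by (simp add: Am_def Xn_def)
  qed
qed

lemma final_sample:
  assumes p: "p \<ge> 1" and vx: "vnorm n x = sqrt (real n)" and K: "K \<ge> 0"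
    and gb: "vnorm n (tensor_apply n p (sym_noise p Gt) u) \<le> K * sqrt (real n) * vnorm n u ^ (p - 1)"
    and lam: "lam > 0" and \<tau>: "\<tau> > 0" and cu: "corr n u x \<ge> \<tau>"
  shows "corr n (tensor_apply n p (spiked_tensor p lam x Gt) u) x
           \<ge> 1 - 2 * K * inverse lam * \<tau> powr (1 - real p) * real n powr ((1 - real p) / 2)"
proof -
  define V where "V = vnorm n u"
  define X where "X = sqrt (real n)"
  have VX0: "V * X \<ge> 0" by (simp add: V_def X_def)
  have VX: "V * X > 0"
  proof (rule ccontr)
    assume "\<not> V * X > 0"
    then have "V * X = 0" using VX0 by linarith
    then have "corr n u x = 0" unfolding corr_def using vx by (simp add: V_def X_def)
    then show False using cu \<tau> by simp
  qed
  have "V \<noteq> 0" "X \<noteq> 0" using VX by auto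
  moreover have "V \<ge> 0" "X \<ge> 0" by (simp_all add: V_def X_def)
  ultimately have V0: "V > 0" and X0: "X > 0" by linarith+
  have n1: "real n > 0" using X0 by (simp add: X_def)
  define ip where "ip = vinner n x u"
  have ipb: "\<bar>ip\<bar> \<ge> \<tau> * V * X"
  proof -
    have "\<tau> \<le> \<bar>vinner n u x\<bar> / (V * X)" using cu vx unfolding corr_def V_def X_def by simp
    then have "\<tau> * (V * X) \<le> \<bar>vinner n u x\<bar>" using VX by (simp add: pos_le_divide_eq)
    then show ?thesis by (simp add: ip_def vinner_comm mult.assoc)
  qed
  define a where "a = lam * ip^(p-1)"
  define g where "g = tensor_apply n p (sym_noise p Gt) u"
  have tvx: "\<tau> * V * X > 0" using \<tau> V0 X0 by simp
  have abig: "\<bar>a\<bar> \<ge> lam * (\<tau> * V * X)^(p-1)"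
  proof -
    have "(\<tau> * V * X)^(p-1) \<le> \<bar>ip\<bar>^(p-1)" using ipb tvx by (intro power_mono) auto
    then have "lam * (\<tau> * V * X)^(p-1) \<le> lam * \<bar>ip\<bar>^(p-1)" using lam by simp
    then show ?thesis unfolding a_def using lam by (simp add: abs_mult power_abs)
  qed
  have lp: "lam * (\<tau> * V * X)^(p-1) > 0" using lam tvx by simp
  have apos: "\<bar>a\<bar> * X > 0" using abig lp X0 by (intro mult_pos_pos) auto
  have main0: "corr n (tensor_apply n p (spiked_tensor p lam x Gt) u) x
      \<ge> 1 - 2 * (K * X * V^(p-1)) / (\<bar>a\<bar> * vnorm n x)"
  proof (rule corr_lb)
    show "vnorm n x > 0" using vx X0 X_def by simp
    show "\<bar>a\<bar> * vnorm n x > 0" using vx apos X_def by simp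
    show "vnorm n g \<le> K * X * V^(p-1)" using gb by (simp add: g_def X_def V_def)
    show "tensor_apply n p (spiked_tensor p lam x Gt) u i = a * x i + g i" for i
      by (simp add: tensor_apply_spiked[OF p] a_def ip_def g_def)
  qed
  have main: "corr n (tensor_apply n p (spiked_tensor p lam x Gt) u) x
      \<ge> 1 - 2 * (K * X * V^(p-1)) / (\<bar>a\<bar> * X)"
    using main0 vx by (simp add: X_def)
  have "2 * (K * X * V^(p-1)) / (\<bar>a\<bar> * X) \<le> 2 * (K * X * V^(p-1)) / (lam * (\<tau> * V * X)^(p-1) * X)"
  proof (rule divide_left_mono)
    show "lam * (\<tau> * V * X)^(p-1) * X \<le> \<bar>a\<bar> * X" using abig X0 by (intro mult_right_mono) auto
    show "0 \<le> 2 * (K * X * V^(p-1))" using K X0 V0 by simp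
    show "0 < \<bar>a\<bar> * X * (lam * (\<tau> * V * X)^(p-1) * X)" using apos lp X0 by simp
  qed
  also have "\<dots> = 2 * K * inverse lam * inverse (\<tau>^(p-1)) * inverse (X^(p-1))"
  proof -
    have e1: "lam * (\<tau> * V * X)^(p-1) * X = (V^(p-1) * X) * (lam * \<tau>^(p-1) * X^(p-1))"
      by (simp add: power_mult_distrib mult_ac)
    have e2: "2 * (K * X * V^(p-1)) = (V^(p-1) * X) * (2 * K)" by (simp add: mult_ac)
    have nz: "V^(p-1) * X \<noteq> 0" using V0 X0 by simp
    have "2 * (K * X * V^(p-1)) / (lam * (\<tau> * V * X)^(p-1) * X) = (2 * K) / (lam * \<tau>^(p-1) * X^(p-1))"
      unfolding e1 e2 by (rule nonzero_mult_divide_mult_cancel_left[OF nz])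
    also have "\<dots> = 2 * K * inverse lam * inverse (\<tau>^(p-1)) * inverse (X^(p-1))"
      by (simp add: divide_inverse inverse_mult_distrib mult_ac)
    finally show ?thesis .
  qed
  also have "inverse (\<tau>^(p-1)) = \<tau> powr (1 - real p)"
  proof -
    have "\<tau> powr (1 - real p) = \<tau> powr (- real (p - 1))" using p by (simp add: of_nat_diff)
    also have "\<dots> = inverse (\<tau> powr real (p - 1))" by (simp add: powr_minus)
    also have "\<dots> = inverse (\<tau>^(p-1))" using \<tau> by (simp add: powr_realpow)
    finally show ?thesis by simp
  qed
  also have "inverse (X^(p-1)) = real n powr ((1 - real p) / 2)"
  proof -
    have "X^(p-1) = (real n powr (1/2))^(p-1)" using n1 by (simp add: X_def powr_half_sqrt)
    also have "\<dots> = real n powr (real (p-1) * (1/2))" using n1 by (simp add: powr_power)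
    finally have "inverse (X^(p-1)) = inverse (real n powr (real (p-1) * (1/2)))" by simp
    also have "\<dots> = real n powr (- (real (p-1) * (1/2)))" by (simp add: powr_minus)
    also have "- (real (p-1) * (1/2)) = (1 - real p) / 2"
    proof -
      have r: "real (p-1) = real p - 1" using p by (simp add: of_nat_diff)
      show ?thesis unfolding r by (simp add: field_simps)
    qed
    finally show ?thesis .
  qed
  finally show ?thesis using main by simp
qed

lemma vnorm_meas:
  assumes "sets M = sets (vec_space n)"
  shows "(\<lambda>x. vnorm n x) \<in> borel_measurable M"
proof -
  have comp: "(\<lambda>x. x i) \<in> borel_measurable (vec_space n)" if "i \<in> {..<n}" for i
    using measurable_component_singleton[OF that, of "\<lambda>_. lborel"]
    by (simp add: vec_space_def measurable_cong_sets[OF refl sets_lborel])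
  have "(\<lambda>x. vnorm n x) \<in> borel_measurable (vec_space n)"
    unfolding vnorm_def vinner_def
    by (rule measurable_compose[OF _ borel_measurable_sqrt])
       (intro borel_measurable_sum borel_measurable_times comp; assumption)
  then show ?thesis by (simp add: measurable_cong_sets[OF assms refl])
qed

definition Aset :: "nat \<Rightarrow> (nat \<Rightarrow> real) measure \<Rightarrow> (nat \<Rightarrow> real) set" where
  "Aset n \<mu> = {x \<in> space \<mu>. vnorm n x = sqrt (real n)}"

lemma Aset_sets: "sphere_prior n \<mu> \<Longrightarrow> Aset n \<mu> \<in> sets \<mu>"
  unfolding Aset_def sphere_prior_def using vnorm_meas[of \<mu> n] by measurable

lemma Aset_prob: "sphere_prior n \<mu> \<Longrightarrow> measure \<mu> (Aset n \<mu>) = 1"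
proof -
  assume s: "sphere_prior n \<mu>"
  then interpret prob_space \<mu> by (simp add: sphere_prior_def)
  show ?thesis using prob_Collect_eq_1[of "\<lambda>x. vnorm n x = sqrt (real n)"] Aset_sets[OF s] s
    by (simp add: Aset_def sphere_prior_def)
qed

lemma prob_space_gauss_tensor: "prob_space (gauss_tensor n p)"
  unfolding gauss_tensor_def by (rule prob_space_GM)

lemma model_times:
  assumes s: "sphere_prior n \<mu>" and A: "A \<in> sets \<mu>" and B: "B \<in> sets (gauss_tensor n p)"
  shows "measure (model n p \<mu>) (A \<times> B) = measure \<mu> A * measure (gauss_tensor n p) B"
proof -
  interpret G: prob_space "gauss_tensor n p" by (rule prob_space_gauss_tensor)
  interpret P: prob_space \<mu> using s by (simp add: sphere_prior_def)
  interpret M: prob_space "model n p \<mu>" unfolding model_def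
    by (rule prob_space_pair) (unfold_locales)
  have "ennreal (measure (model n p \<mu>) (A \<times> B)) = emeasure (model n p \<mu>) (A \<times> B)"
    by (simp add: M.emeasure_eq_measure)
  also have "\<dots> = emeasure \<mu> A * emeasure (gauss_tensor n p) B"
    unfolding model_def by (rule G.emeasure_pair_measure_Times[OF A B])
  also have "\<dots> = ennreal (measure \<mu> A * measure (gauss_tensor n p) B)"
    by (simp add: P.emeasure_eq_measure G.emeasure_eq_measure ennreal_mult)
  finally show ?thesis by (simp add: ennreal_inj)
qed

definition C0 :: "nat \<Rightarrow> real" where
  "C0 p = sqrt (2 * fact p * (2 * real p * (real p + 1) + 1))"

lemma C0_pos: "C0 p > 0"
proof -
  have "0 \<le> 2 * real p * (real p + 1)" by simp
  then have a: "0 < 2 * real p * (real p + 1) + 1" by linarith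
  have b: "(0::real) < 2 * fact p" by simp
  show ?thesis unfolding C0_def by (intro real_sqrt_gt_zero mult_pos_pos a b)
qed

lemma C0_nonneg: "C0 p * sqrt (real n) \<ge> 0"
  using C0_pos[of p] by (intro mult_nonneg_nonneg) simp_all

definition Eset :: "nat \<Rightarrow> nat \<Rightarrow> (nat \<Rightarrow> real) measure \<Rightarrow> ((nat \<Rightarrow> real) \<times> (nat list \<Rightarrow> real)) set" where
  "Eset n p \<mu> = Aset n \<mu> \<times> Bset n p (C0 p * sqrt (real n))"

lemma Eset_sets: "sphere_prior n \<mu> \<Longrightarrow> Eset n p \<mu> \<in> sets (model n p \<mu>)"
  unfolding Eset_def model_def using Aset_sets Bset_sets by (intro pair_measureI) auto

lemma Eset_prob:
  assumes s: "sphere_prior n \<mu>"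
  shows "measure (model n p \<mu>) (Eset n p \<mu>) \<ge> 1 - 2 * exp (- real n)"
proof -
  define t where "t = C0 p * sqrt (real n)"
  have t0: "t \<ge> 0" using C0_nonneg by (simp add: t_def)
  have "measure (model n p \<mu>) (Eset n p \<mu>) = measure (gauss_tensor n p) (Bset n p t)"
    unfolding Eset_def t_def using model_times[OF s Aset_sets[OF s] Bset_sets] Aset_prob[OF s] by simp
  moreover have "measure (gauss_tensor n p) (Bset n p t) \<ge> 1 - real (card (Wset n p)) * (2 * exp (- (t^2) / (2 * fact p)))"
    by (rule Bset_prob[OF t0])
  moreover have "real (card (Wset n p)) * (2 * exp (- (t^2) / (2 * fact p))) \<le> 2 * exp (- real n)"
  proof -
    have tt: "- (t^2) / (2 * fact p) = - ((2 * real p * (real p + 1) + 1) * real n)"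
    proof -
      have "t^2 = 2 * fact p * (2 * real p * (real p + 1) + 1) * real n"
        unfolding t_def C0_def by (simp add: power_mult_distrib)
      then show ?thesis by simp
    qed
    have "real (card (Wset n p)) * (2 * exp (- (t^2) / (2 * fact p)))
        \<le> exp (2 * real p * (real p + 1) * real n) * (2 * exp (- ((2 * real p * (real p + 1) + 1) * real n)))"
      unfolding tt by (intro mult_right_mono card_Wset) simp
    also have "\<dots> = 2 * exp (- real n)"
      by (simp add: mult.left_commute flip: exp_add) (simp add: algebra_simps)
    finally show ?thesis .
  qed
  ultimately show ?thesis by linarith
qed

lemma lim_one: "(\<lambda>n. 1 - 2 * exp (- real n)) \<longlonglongrightarrow> (1::real)"
proof -
  have e: "exp (- real n) = exp (-1) ^ n" for n
    using exp_of_nat_mult[of n "-1"] by simp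
  have "(\<lambda>n. exp (-1::real) ^ n) \<longlonglongrightarrow> 0" by (rule LIMSEQ_power_zero) simp
  then have "(\<lambda>n. 1 - 2 * exp (-1::real) ^ n) \<longlonglongrightarrow> 1 - 2 * 0"
    using tendsto_diff[OF tendsto_const[of 1] tendsto_mult_left[of _ 0 sequentially 2]] by blast
  then show ?thesis by (simp add: e)
qed

lemma Eset_lim:
  assumes s: "\<And>n. sphere_prior n (\<mu> n)"
  shows "(\<lambda>n. measure (model n p (\<mu> n)) (Eset n p (\<mu> n))) \<longlonglongrightarrow> 1"
proof (rule real_tendsto_sandwich[OF _ _ lim_one tendsto_const])
  show "\<forall>\<^sub>F n in sequentially. 1 - 2 * exp (- real n) \<le> measure (model n p (\<mu> n)) (Eset n p (\<mu> n))"
    using Eset_prob[OF s] by simp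
  show "\<forall>\<^sub>F n in sequentially. measure (model n p (\<mu> n)) (Eset n p (\<mu> n)) \<le> 1"
  proof (intro always_eventually allI)
    fix n
    interpret prob_space "model n p (\<mu> n)" unfolding model_def
      using s[of n] prob_space_gauss_tensor by (intro prob_space_pair) (auto simp: sphere_prior_def)
    show "measure (model n p (\<mu> n)) (Eset n p (\<mu> n)) \<le> 1" by (rule prob_le_1)
  qed
qed

lemma Eset_noise:
  assumes p: "p \<ge> 1" and xG: "(x, Gt) \<in> Eset n p \<mu>"
  shows "vnorm n x = sqrt (real n)"
    and "vnorm n (tensor_apply n p (sym_noise p Gt) u) \<le> (2 * C0 p) * sqrt (real n) * vnorm n u ^ (p - 1)"
proof -
  show "vnorm n x = sqrt (real n)" using xG by (simp add: Eset_def Aset_def)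
  show "vnorm n (tensor_apply n p (sym_noise p Gt) u) \<le> (2 * C0 p) * sqrt (real n) * vnorm n u ^ (p - 1)"
  proof (cases "n = 0")
    case True
    then show ?thesis by (simp add: vnorm_def vinner_def)
  next
    case False
    then have n: "n \<ge> 1" by simp
    define t where "t = C0 p * sqrt (real n)"
    have G: "Gt \<in> Bset n p t" using xG by (simp add: Eset_def t_def)
    have t0: "2 * t \<ge> 0" using C0_nonneg[of p n] by (simp add: t_def)
    have "\<bar>mlf n p (sym_noise p Gt) ws\<bar> \<le> 2 * t * (\<Prod>k<p. vnorm n (ws k))" for ws
      by (rule mlf_hom_bound) (rule Bset_bound[OF n p G])
    then have "vnorm n (tensor_apply n p (sym_noise p Gt) u) \<le> 2 * t * vnorm n u ^ (p - 1)"
      by (intro tensor_apply_norm[OF p t0])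
    then show ?thesis by (simp add: t_def mult.assoc)
  qed
qed

lemma Eset_space: "sphere_prior n \<mu> \<Longrightarrow> Eset n p \<mu> \<subseteq> space (model n p \<mu>)"
  using sets.sets_into_space[OF Eset_sets] by blast

lemma Eset_corr:
  assumes p: "p \<ge> 1" and xG: "(x, Gt) \<in> Eset n p \<mu>"
    and lam: "lam > 0" and \<tau>: "\<tau> > 0" and cu: "corr n u x \<ge> \<tau>"
  shows "corr n (tensor_apply n p (spiked_tensor p lam x Gt) u) x
           \<ge> 1 - (4 * C0 p) * inverse lam * \<tau> powr (1 - real p) * real n powr ((1 - real p) / 2)"
proof -
  have "corr n (tensor_apply n p (spiked_tensor p lam x Gt) u) x
           \<ge> 1 - 2 * (2 * C0 p) * inverse lam * \<tau> powr (1 - real p) * real n powr ((1 - real p) / 2)"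
    by (rule final_sample[OF p Eset_noise(1)[OF p xG] _ Eset_noise(2)[OF p xG] lam \<tau> cu])
       (use C0_pos in \<open>simp add: less_imp_le\<close>)
  then show ?thesis by simp
qed

theorem proposition1:
  fixes p :: nat
  assumes "p \<ge> 2"
  shows "(\<exists>c>0. \<forall>(lam :: nat \<Rightarrow> real) (prior :: nat \<Rightarrow> (nat \<Rightarrow> real) measure).
            (\<forall>n. lam n \<ge> 0) \<and> (\<forall>n. sphere_prior n (prior n)) \<longrightarrow>
            whp (\<lambda>n. model n p (prior n))
              (\<lambda>n. {(x, Gt) \<in> space (model n p (prior n)).
                 \<forall>u \<tau>. \<tau> > 0 \<and> lam n > 0 \<and> corr n u x \<ge> \<tau> \<longrightarrow>
                   corr n (tensor_apply n p (spiked_tensor p (lam n) x Gt) u) x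
                     \<ge> 1 - c * inverse (lam n) * \<tau> powr (1 - real p) * real n powr ((1 - real p) / 2)}))
       \<and> (\<forall>(lam :: nat \<Rightarrow> real) (prior :: nat \<Rightarrow> (nat \<Rightarrow> real) measure) (\<tau> :: real).
            (\<forall>n. lam n \<ge> 0) \<and> (\<forall>n. sphere_prior n (prior n)) \<and> \<tau> > 0
            \<and> (\<lambda>n. real n powr ((1 - real p) / 2)) \<in> o(lam) \<longrightarrow>
            (\<forall>\<epsilon>>0. whp (\<lambda>n. model n p (prior n))
              (\<lambda>n. {(x, Gt) \<in> space (model n p (prior n)).
                 \<forall>u. corr n u x \<ge> \<tau> \<longrightarrow>
                   corr n (tensor_apply n p (spiked_tensor p (lam n) x Gt) u) x \<ge> 1 - \<epsilon>})))"
proof (intro conjI)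
  have p: "p \<ge> 1" using assms by simp
  define c where "c = 4 * C0 p"
  have c0: "c > 0" using C0_pos by (simp add: c_def)
  show "\<exists>c>0. \<forall>(lam :: nat \<Rightarrow> real) (prior :: nat \<Rightarrow> (nat \<Rightarrow> real) measure).
            (\<forall>n. lam n \<ge> 0) \<and> (\<forall>n. sphere_prior n (prior n)) \<longrightarrow>
            whp (\<lambda>n. model n p (prior n))
              (\<lambda>n. {(x, Gt) \<in> space (model n p (prior n)).
                 \<forall>u \<tau>. \<tau> > 0 \<and> lam n > 0 \<and> corr n u x \<ge> \<tau> \<longrightarrow>
                   corr n (tensor_apply n p (spiked_tensor p (lam n) x Gt) u) x
                     \<ge> 1 - c * inverse (lam n) * \<tau> powr (1 - real p) * real n powr ((1 - real p) / 2)})"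
  proof (intro exI[of _ c] conjI c0 allI impI)
    fix lam :: "nat \<Rightarrow> real" and prior :: "nat \<Rightarrow> (nat \<Rightarrow> real) measure"
    assume asm: "(\<forall>n. lam n \<ge> 0) \<and> (\<forall>n. sphere_prior n (prior n))"
    then have s: "\<And>n. sphere_prior n (prior n)" by blast
    show "whp (\<lambda>n. model n p (prior n))
              (\<lambda>n. {(x, Gt) \<in> space (model n p (prior n)).
                 \<forall>u \<tau>. \<tau> > 0 \<and> lam n > 0 \<and> corr n u x \<ge> \<tau> \<longrightarrow>
                   corr n (tensor_apply n p (spiked_tensor p (lam n) x Gt) u) x
                     \<ge> 1 - c * inverse (lam n) * \<tau> powr (1 - real p) * real n powr ((1 - real p) / 2)})"
      unfolding whp_def
    proof (intro exI[of _ "\<lambda>n. Eset n p (prior n)"] conjI allI)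
      fix n
      show "Eset n p (prior n) \<in> sets (model n p (prior n))" by (rule Eset_sets[OF s])
      show "Eset n p (prior n) \<subseteq> {(x, Gt) \<in> space (model n p (prior n)).
                 \<forall>u \<tau>. \<tau> > 0 \<and> lam n > 0 \<and> corr n u x \<ge> \<tau> \<longrightarrow>
                   corr n (tensor_apply n p (spiked_tensor p (lam n) x Gt) u) x
                     \<ge> 1 - c * inverse (lam n) * \<tau> powr (1 - real p) * real n powr ((1 - real p) / 2)}"
      proof (intro subsetI)
        fix z assume z: "z \<in> Eset n p (prior n)"
        obtain x Gt where zx: "z = (x, Gt)" by (cases z)
        have sp: "z \<in> space (model n p (prior n))" using Eset_space[OF s] z by blast
        have "\<forall>u \<tau>. \<tau> > 0 \<and> lam n > 0 \<and> corr n u x \<ge> \<tau> \<longrightarrow>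
                   corr n (tensor_apply n p (spiked_tensor p (lam n) x Gt) u) x
                     \<ge> 1 - c * inverse (lam n) * \<tau> powr (1 - real p) * real n powr ((1 - real p) / 2)"
          using Eset_corr[OF p z[unfolded zx]] by (auto simp: c_def)
        then show "z \<in> {(x, Gt) \<in> space (model n p (prior n)).
                 \<forall>u \<tau>. \<tau> > 0 \<and> lam n > 0 \<and> corr n u x \<ge> \<tau> \<longrightarrow>
                   corr n (tensor_apply n p (spiked_tensor p (lam n) x Gt) u) x
                     \<ge> 1 - c * inverse (lam n) * \<tau> powr (1 - real p) * real n powr ((1 - real p) / 2)}"
          using sp zx by simp
      qed
    next
      show "(\<lambda>n. measure (model n p (prior n)) (Eset n p (prior n))) \<longlonglongrightarrow> 1"
        by (rule Eset_lim[OF s])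
    qed
  qed
next
  have p: "p \<ge> 1" using assms by simp
  show "\<forall>(lam :: nat \<Rightarrow> real) (prior :: nat \<Rightarrow> (nat \<Rightarrow> real) measure) (\<tau> :: real).
            (\<forall>n. lam n \<ge> 0) \<and> (\<forall>n. sphere_prior n (prior n)) \<and> \<tau> > 0
            \<and> (\<lambda>n. real n powr ((1 - real p) / 2)) \<in> o(lam) \<longrightarrow>
            (\<forall>\<epsilon>>0. whp (\<lambda>n. model n p (prior n))
              (\<lambda>n. {(x, Gt) \<in> space (model n p (prior n)).
                 \<forall>u. corr n u x \<ge> \<tau> \<longrightarrow>
                   corr n (tensor_apply n p (spiked_tensor p (lam n) x Gt) u) x \<ge> 1 - \<epsilon>}))"
  proof (intro allI impI)
    fix lam :: "nat \<Rightarrow> real" and prior :: "nat \<Rightarrow> (nat \<Rightarrow> real) measure" and \<tau> :: real and \<epsilon> :: real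
    assume asm: "(\<forall>n. lam n \<ge> 0) \<and> (\<forall>n. sphere_prior n (prior n)) \<and> \<tau> > 0
            \<and> (\<lambda>n. real n powr ((1 - real p) / 2)) \<in> o(lam)"
      and e: "\<epsilon> > 0"
    then have s: "\<And>n. sphere_prior n (prior n)" and l0: "\<And>n. lam n \<ge> 0" and \<tau>: "\<tau> > 0"
      and o: "(\<lambda>n. real n powr ((1 - real p) / 2)) \<in> o(lam)" by blast+
    define q where "q = \<tau> powr (1 - real p)"
    have q0: "q > 0" using \<tau> by (simp add: q_def)
    define c' where "c' = \<epsilon> / (4 * C0 p * q)"
    have c'0: "c' > 0" using e q0 C0_pos[of p] by (simp add: c'_def)
    have ev: "eventually (\<lambda>n. norm (real n powr ((1 - real p) / 2)) \<le> c' * norm (lam n)) sequentially"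
      by (rule landau_o.smallD[OF o c'0])
    then obtain N0 where N0: "\<And>n. n \<ge> N0 \<Longrightarrow> norm (real n powr ((1 - real p) / 2)) \<le> c' * norm (lam n)"
      unfolding eventually_sequentially by blast
    define N where "N = max N0 1"
    have good: "lam n > 0 \<and> 4 * C0 p * inverse (lam n) * q * real n powr ((1 - real p) / 2) \<le> \<epsilon>"
      if n: "n \<ge> N" for n
    proof -
      have n1: "real n > 0" using n by (simp add: N_def)
      have pw: "real n powr ((1 - real p) / 2) > 0" using n1 by simp
      have b: "real n powr ((1 - real p) / 2) \<le> c' * lam n" using N0[of n] n l0[of n] pw
        by (simp add: N_def)
      have lp: "lam n > 0"
      proof (rule ccontr)
        assume "\<not> lam n > 0"
        then have "lam n = 0" using l0[of n] by simp
        then show False using b pw by simp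
      qed
      have "inverse (lam n) * real n powr ((1 - real p) / 2) \<le> inverse (lam n) * (c' * lam n)"
        using b lp by (intro mult_left_mono) auto
      also have "\<dots> = c'" using lp by simp
      finally have i: "inverse (lam n) * real n powr ((1 - real p) / 2) \<le> c'" .
      have "4 * C0 p * inverse (lam n) * q * real n powr ((1 - real p) / 2)
          = (4 * C0 p * q) * (inverse (lam n) * real n powr ((1 - real p) / 2))" by (simp add: mult_ac)
      also have "\<dots> \<le> (4 * C0 p * q) * c'" using i q0 C0_pos[of p] by (intro mult_left_mono) auto
      also have "\<dots> = \<epsilon>" using q0 C0_pos[of p] by (simp add: c'_def)
      finally show ?thesis using lp by simp
    qed
    show "whp (\<lambda>n. model n p (prior n))
              (\<lambda>n. {(x, Gt) \<in> space (model n p (prior n)).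
                 \<forall>u. corr n u x \<ge> \<tau> \<longrightarrow>
                   corr n (tensor_apply n p (spiked_tensor p (lam n) x Gt) u) x \<ge> 1 - \<epsilon>})"
      unfolding whp_def
    proof (intro exI[of _ "\<lambda>n. if N \<le> n then Eset n p (prior n) else {}"] conjI allI)
      fix n
      show "(if N \<le> n then Eset n p (prior n) else {}) \<in> sets (model n p (prior n))"
        using Eset_sets[OF s] by simp
      show "(if N \<le> n then Eset n p (prior n) else {}) \<subseteq> {(x, Gt) \<in> space (model n p (prior n)).
                 \<forall>u. corr n u x \<ge> \<tau> \<longrightarrow>
                   corr n (tensor_apply n p (spiked_tensor p (lam n) x Gt) u) x \<ge> 1 - \<epsilon>}"
      proof (cases "N \<le> n")
        case True
        show ?thesis
        proof (intro subsetI)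
          fix z assume z0: "z \<in> (if N \<le> n then Eset n p (prior n) else {})"
          then have z: "z \<in> Eset n p (prior n)" using True by simp
          obtain x Gt where zx: "z = (x, Gt)" by (cases z)
          have sp: "z \<in> space (model n p (prior n))" using Eset_space[OF s] z by blast
          have "\<forall>u. corr n u x \<ge> \<tau> \<longrightarrow>
                   corr n (tensor_apply n p (spiked_tensor p (lam n) x Gt) u) x \<ge> 1 - \<epsilon>"
          proof (intro allI impI)
            fix u assume cu: "corr n u x \<ge> \<tau>"
            have g: "lam n > 0" "4 * C0 p * inverse (lam n) * q * real n powr ((1 - real p) / 2) \<le> \<epsilon>"
              using good[OF True] by auto
            have "corr n (tensor_apply n p (spiked_tensor p (lam n) x Gt) u) x
                \<ge> 1 - (4 * C0 p) * inverse (lam n) * \<tau> powr (1 - real p) * real n powr ((1 - real p) / 2)"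
              by (rule Eset_corr[OF p z[unfolded zx] g(1) \<tau> cu])
            then show "corr n (tensor_apply n p (spiked_tensor p (lam n) x Gt) u) x \<ge> 1 - \<epsilon>"
              using g(2) unfolding q_def by linarith
          qed
          then show "z \<in> {(x, Gt) \<in> space (model n p (prior n)).
                 \<forall>u. corr n u x \<ge> \<tau> \<longrightarrow>
                   corr n (tensor_apply n p (spiked_tensor p (lam n) x Gt) u) x \<ge> 1 - \<epsilon>}"
            using sp zx by simp
        qed
      qed simp
    next
      have "(\<lambda>n. measure (model n p (prior n)) (Eset n p (prior n))) \<longlonglongrightarrow> 1"
        by (rule Eset_lim[OF s])
      moreover have "eventually (\<lambda>n. measure (model n p (prior n)) (Eset n p (prior n))
            = measure (model n p (prior n)) (if N \<le> n then Eset n p (prior n) else {})) sequentially"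
        unfolding eventually_sequentially by (intro exI[of _ N]) simp
      ultimately show "(\<lambda>n. measure (model n p (prior n)) (if N \<le> n then Eset n p (prior n) else {})) \<longlonglongrightarrow> 1"
        by (rule Lim_transform_eventually)
    qed
  qed
qed

end
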